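(* Let $A$ and $B$ be unital Banach algebras (over $\mathbb{R}$ or $\mathbb{C}$) with $A$ finite-dimensional, and let $\varphi\colon A\to B$ be a continuous unital algebra morphism. (1) If $\varphi$ annihilates the Jacobson radical $\operatorname{rad}A$, then the orbit of $\varphi$ under conjugation by $B^\times$ (i.e. $\{u\varphi u^{-1}:u\in B^\times\}$) is closed in the space $\mathbf{BAlg}(A,B)$ of continuous unital algebra morphisms $A\to B$. (2) Conversely, if $B$ is finite-dimensional and semisimple and the $B^\times$-orbit of $\varphi$ is closed, then $\varphi$ annihilates $\operatorname{rad}A$.
   Context: Unital Banach algebras satisfy $\|1\|=1$; $\mathbf{BAlg}(A,B)$ carries the topology induced by the operator norm on bounded linear maps $A\to B$. $B^\times$ is the group of invertible elements of $B$. $\operatorname{rad}A$ is the Jacobson radical (intersection of all maximal left ideals). An algebra is semisimple if it is a finite product of matrix algebras over division rings. *)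

theory Defs
  imports "HOL-Analysis.Analysis" "HOL-Algebra.Ring"
begin

definition left_ideal :: "'a::ring_1 set \<Rightarrow> bool" where
  "left_ideal I \<longleftrightarrow> 0 \<in> I \<and> (\<forall>x\<in>I. \<forall>y\<in>I. x + y \<in> I) \<and> (\<forall>a. \<forall>x\<in>I. a * x \<in> I)"

definition maximal_left_ideal :: "'a::ring_1 set \<Rightarrow> bool" where
  "maximal_left_ideal I \<longleftrightarrow> left_ideal I \<and> I \<noteq> UNIV \<and>
     (\<forall>J. left_ideal J \<and> I \<subseteq> J \<and> J \<noteq> UNIV \<longrightarrow> J = I)"

definition jacobson_radical :: "'a::ring_1 set" where
  "jacobson_radical = \<Inter>{I. maximal_left_ideal I}"

definition invertible_elem :: "'a::ring_1 \<Rightarrow> bool" where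
  "invertible_elem u \<longleftrightarrow> (\<exists>v. u * v = 1 \<and> v * u = 1)"

definition finite_dim_space :: "'a::real_vector itself \<Rightarrow> bool" where
  "finite_dim_space _ \<longleftrightarrow> (\<exists>S::'a set. finite S \<and> span S = UNIV)"

definition division_ring_struct :: "('c, 'm) ring_scheme \<Rightarrow> bool" where
  "division_ring_struct D \<longleftrightarrow> ring D \<and> \<one>\<^bsub>D\<^esub> \<noteq> \<zero>\<^bsub>D\<^esub> \<and>
     (\<forall>x \<in> carrier D - {\<zero>\<^bsub>D\<^esub>}. x \<in> Units D)"

text \<open>Elements of \<open>\<Prod>_{i<m} M_{ns i}(D i)\<close>: functions \<open>i \<Rightarrow> j \<Rightarrow> k \<Rightarrow> entry\<close>,
  extensional (undefined outside the index ranges).\<close>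
definition mat_prod_carrier :: "nat \<Rightarrow> (nat \<Rightarrow> nat) \<Rightarrow> (nat \<Rightarrow> 'c ring) \<Rightarrow> (nat \<Rightarrow> nat \<Rightarrow> nat \<Rightarrow> 'c) set" where
  "mat_prod_carrier m ns D = {M. \<forall>i j k. if i < m \<and> j < ns i \<and> k < ns i
      then M i j k \<in> carrier (D i) else M i j k = undefined}"

definition mat_prod_add :: "nat \<Rightarrow> (nat \<Rightarrow> nat) \<Rightarrow> (nat \<Rightarrow> 'c ring) \<Rightarrow>
    (nat \<Rightarrow> nat \<Rightarrow> nat \<Rightarrow> 'c) \<Rightarrow> (nat \<Rightarrow> nat \<Rightarrow> nat \<Rightarrow> 'c) \<Rightarrow> (nat \<Rightarrow> nat \<Rightarrow> nat \<Rightarrow> 'c)" where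
  "mat_prod_add m ns D M N = (\<lambda>i j k. if i < m \<and> j < ns i \<and> k < ns i
      then M i j k \<oplus>\<^bsub>D i\<^esub> N i j k else undefined)"

definition mat_prod_mult :: "nat \<Rightarrow> (nat \<Rightarrow> nat) \<Rightarrow> (nat \<Rightarrow> 'c ring) \<Rightarrow>
    (nat \<Rightarrow> nat \<Rightarrow> nat \<Rightarrow> 'c) \<Rightarrow> (nat \<Rightarrow> nat \<Rightarrow> nat \<Rightarrow> 'c) \<Rightarrow> (nat \<Rightarrow> nat \<Rightarrow> nat \<Rightarrow> 'c)" where
  "mat_prod_mult m ns D M N = (\<lambda>i j k. if i < m \<and> j < ns i \<and> k < ns i
      then finsum (D i) (\<lambda>l. M i j l \<otimes>\<^bsub>D i\<^esub> N i l k) {..<ns i} else undefined)"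

definition mat_prod_one :: "nat \<Rightarrow> (nat \<Rightarrow> nat) \<Rightarrow> (nat \<Rightarrow> 'c ring) \<Rightarrow> (nat \<Rightarrow> nat \<Rightarrow> nat \<Rightarrow> 'c)" where
  "mat_prod_one m ns D = (\<lambda>i j k. if i < m \<and> j < ns i \<and> k < ns i
      then (if j = k then \<one>\<^bsub>D i\<^esub> else \<zero>\<^bsub>D i\<^esub>) else undefined)"

text \<open>The division rings are represented with carriers
  inside \<open>'b\<close>; this is no restriction, since each \<open>D_i\<close> is isomorphic to a corner
  \<open>e B e\<close> of \<open>B\<close> itself.\<close>
definition semisimple :: "'b::ring_1 itself \<Rightarrow> bool" where
  "semisimple _ \<longleftrightarrow> (\<exists>(m::nat) (ns::nat \<Rightarrow> nat) (D::nat \<Rightarrow> 'b ring) (f::'b \<Rightarrow> (nat \<Rightarrow> nat \<Rightarrow> nat \<Rightarrow> 'b)).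
      (\<forall>i<m. division_ring_struct (D i) \<and> 0 < ns i) \<and>
      bij_betw f UNIV (mat_prod_carrier m ns D) \<and>
      (\<forall>x y. f (x + y) = mat_prod_add m ns D (f x) (f y)) \<and>
      (\<forall>x y. f (x * y) = mat_prod_mult m ns D (f x) (f y)) \<and>
      f 1 = mat_prod_one m ns D)"

definition BAlg :: "('a::real_normed_algebra_1 \<Rightarrow>\<^sub>L 'b::real_normed_algebra_1) set" where
  "BAlg = {\<psi>. (\<forall>x y. blinfun_apply \<psi> (x * y) = blinfun_apply \<psi> x * blinfun_apply \<psi> y)
              \<and> blinfun_apply \<psi> 1 = 1}"

definition conj_orbit :: "('a::real_normed_algebra_1 \<Rightarrow>\<^sub>L 'b::real_normed_algebra_1) \<Rightarrow> ('a \<Rightarrow>\<^sub>L 'b) set" where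
  "conj_orbit \<phi> = {\<psi>. \<exists>u v. u * v = 1 \<and> v * u = 1 \<and>
      (\<forall>x. blinfun_apply \<psi> x = u * blinfun_apply \<phi> x * v)}"

end

theory Submission
  imports Defs
begin


section \<open>Left ideals and the Jacobson radical\<close>

lemma left_idealD:
  assumes "left_ideal I"
  shows "0 \<in> I" "x \<in> I \<Longrightarrow> y \<in> I \<Longrightarrow> x + y \<in> I" "x \<in> I \<Longrightarrow> a * x \<in> I"
  using assms unfolding left_ideal_def by auto

lemma left_ideal_neg: "left_ideal I \<Longrightarrow> x \<in> I \<Longrightarrow> - x \<in> I"
  using left_idealD(3)[of I x "-1"] by simp

lemma left_ideal_diff: "left_ideal I \<Longrightarrow> x \<in> I \<Longrightarrow> y \<in> I \<Longrightarrow> x - y \<in> I"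
  using left_idealD(2)[of I x "-y"] left_ideal_neg[of I y] by simp

lemma left_ideal_sum: "left_ideal I \<Longrightarrow> (\<And>i. i \<in> S \<Longrightarrow> f i \<in> I) \<Longrightarrow> sum f S \<in> I"
  by (induction S rule: infinite_finite_induct) (auto intro: left_idealD)

lemma left_ideal_one: "left_ideal I \<Longrightarrow> 1 \<in> I \<Longrightarrow> I = UNIV"
  using left_idealD(3)[of I 1] by force

lemma left_ideal_Inter: "(\<And>I. I \<in> S \<Longrightarrow> left_ideal I) \<Longrightarrow> left_ideal (\<Inter>S)"
  unfolding left_ideal_def by blast

lemma maximal_left_ideal_D: "maximal_left_ideal M \<Longrightarrow> left_ideal M"
  "maximal_left_ideal M \<Longrightarrow> 1 \<notin> M"
  unfolding maximal_left_ideal_def using left_ideal_one by blast+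

lemma left_ideal_J: "left_ideal (jacobson_radical :: 'a::ring_1 set)"
  unfolding jacobson_radical_def
  by (rule left_ideal_Inter) (auto simp: maximal_left_ideal_def)

lemma J_mult: "x \<in> jacobson_radical \<Longrightarrow> a * x \<in> jacobson_radical"
  using left_idealD(3)[OF left_ideal_J] .
lemma J_add: "x \<in> jacobson_radical \<Longrightarrow> y \<in> jacobson_radical \<Longrightarrow> x + y \<in> jacobson_radical"
  using left_idealD(2)[OF left_ideal_J] .
lemma J_zero: "0 \<in> jacobson_radical"
  using left_idealD(1)[OF left_ideal_J] .
lemma J_diff: "x \<in> jacobson_radical \<Longrightarrow> y \<in> jacobson_radical \<Longrightarrow> x - y \<in> jacobson_radical"
  using left_ideal_diff[OF left_ideal_J] .
lemma J_neg: "x \<in> jacobson_radical \<Longrightarrow> - x \<in> jacobson_radical"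
  using left_ideal_neg[OF left_ideal_J] .
lemma J_sum: "(\<And>i. i \<in> S \<Longrightarrow> f i \<in> jacobson_radical) \<Longrightarrow> sum f S \<in> jacobson_radical"
  using left_ideal_sum[OF left_ideal_J] .
lemma J_scaleR: "(x::'a::real_algebra_1) \<in> jacobson_radical \<Longrightarrow> c *\<^sub>R x \<in> jacobson_radical"
  using J_mult[of x "of_real c"] by (simp add: scaleR_conv_of_real)

lemma exists_maximal_left_ideal:
  fixes K :: "'a::ring_1 set"
  assumes K: "left_ideal K" "1 \<notin> K"
  shows "\<exists>M. maximal_left_ideal M \<and> K \<subseteq> M"
proof -
  define A where "A = {L. left_ideal L \<and> K \<subseteq> L \<and> (1::'a) \<notin> L}"
  have "\<exists>M\<in>A. \<forall>X\<in>A. M \<subseteq> X \<longrightarrow> X = M"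
  proof (rule Zorn_Lemma2, intro ballI)
    fix C assume C: "C \<in> chains A"
    show "\<exists>U\<in>A. \<forall>X\<in>C. X \<subseteq> U"
    proof (cases "C = {}")
      case True then show ?thesis using K by (auto simp: A_def)
    next
      case False
      have CA: "C \<subseteq> A" and ch: "\<And>X Y. X \<in> C \<Longrightarrow> Y \<in> C \<Longrightarrow> X \<subseteq> Y \<or> Y \<subseteq> X"
        using C by (auto simp: chains_def chain_subset_def)
      have "left_ideal (\<Union>C)"
        unfolding left_ideal_def
      proof (intro conjI ballI allI)
        show "0 \<in> \<Union>C" using False CA by (auto simp: A_def left_ideal_def)
      next
        fix x y assume "x \<in> \<Union>C" "y \<in> \<Union>C"
        then obtain X Y where "X \<in> C" "Y \<in> C" "x \<in> X" "y \<in> Y" by auto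
        have LX: "left_ideal X" and LY: "left_ideal Y" using CA \<open>X \<in> C\<close> \<open>Y \<in> C\<close> by (auto simp: A_def)
        show "x + y \<in> \<Union>C"
        proof (cases "X \<subseteq> Y")
          case True then have "x + y \<in> Y" using left_idealD(2)[OF LY, of x y] \<open>x \<in> X\<close> \<open>y \<in> Y\<close> by blast
          then show ?thesis using \<open>Y \<in> C\<close> by blast
        next
          case False then have "Y \<subseteq> X" using ch[OF \<open>X \<in> C\<close> \<open>Y \<in> C\<close>] by auto
          then have "x + y \<in> X" using left_idealD(2)[OF LX, of x y] \<open>x \<in> X\<close> \<open>y \<in> Y\<close> by blast
          then show ?thesis using \<open>X \<in> C\<close> by blast
        qed
      next
        fix a x assume "x \<in> \<Union>C"
        then obtain X where "X \<in> C" "x \<in> X" by auto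
        moreover have "left_ideal X" using CA \<open>X \<in> C\<close> by (auto simp: A_def)
        ultimately have "a * x \<in> X" using left_idealD(3) by blast
        then show "a * x \<in> \<Union>C" using \<open>X \<in> C\<close> by blast
      qed
      moreover have "K \<subseteq> \<Union>C" "1 \<notin> \<Union>C" using False CA by (auto simp: A_def)
      ultimately show ?thesis by (intro bexI[of _ "\<Union>C"]) (auto simp: A_def)
    qed
  qed
  then obtain M where M: "M \<in> A" "\<And>X. X \<in> A \<Longrightarrow> M \<subseteq> X \<Longrightarrow> X = M" by blast
  have "maximal_left_ideal M"
    unfolding maximal_left_ideal_def
  proof (intro conjI allI impI)
    show "left_ideal M" using M by (auto simp: A_def)
    show "M \<noteq> UNIV" using M by (auto simp: A_def)
    fix J assume "left_ideal J \<and> M \<subseteq> J \<and> J \<noteq> UNIV"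
    then have "J \<in> A" using M(1) left_ideal_one[of J] by (auto simp: A_def)
    then show "J = M" using M(2) \<open>left_ideal J \<and> M \<subseteq> J \<and> J \<noteq> UNIV\<close> by auto
  qed
  then show ?thesis using M(1) by (auto simp: A_def)
qed

lemma left_invertible_or_maximal:
  fixes z :: "'a::ring_1"
  assumes "\<nexists>v. v * z = 1"
  shows "\<exists>M. maximal_left_ideal M \<and> z \<in> M"
proof -
  have "left_ideal (range (\<lambda>a. a * z))"
    unfolding left_ideal_def
    by (auto simp: distrib_right mult.assoc intro: range_eqI[of _ _ 0] range_eqI)
       (metis distrib_right rangeI, metis mult.assoc rangeI)
  moreover have "1 \<notin> range (\<lambda>a. a * z)" using assms by auto
  ultimately obtain M where "maximal_left_ideal M" "range (\<lambda>a. a * z) \<subseteq> M"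
    using exists_maximal_left_ideal by blast
  then show ?thesis by (intro exI[of _ M]) (auto intro: range_eqI[of _ _ 1])
qed

lemma J_one_minus_left_inv:
  fixes j :: "'a::ring_1"
  assumes "j \<in> jacobson_radical"
  shows "\<exists>v. v * (1 - j) = 1"
proof (rule ccontr)
  assume "\<nexists>v. v * (1 - j) = 1"
  then obtain M where M: "maximal_left_ideal M" "1 - j \<in> M"
    using left_invertible_or_maximal by blast
  have "j \<in> M" using assms M(1) by (auto simp: jacobson_radical_def)
  then have "1 \<in> M" using left_idealD(2)[OF maximal_left_ideal_D(1)[OF M(1)] M(2) \<open>j \<in> M\<close>] by simp
  then show False using maximal_left_ideal_D(2)[OF M(1)] by simp
qed

lemma J_one_minus_inv:
  fixes j :: "'a::ring_1"
  assumes "j \<in> jacobson_radical"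
  shows "\<exists>v. v * (1 - j) = 1 \<and> (1 - j) * v = 1"
proof -
  obtain v where v: "v * (1 - j) = 1" using J_one_minus_left_inv[OF assms] by blast
  have "- (v * j) \<in> jacobson_radical" using J_neg[OF J_mult[OF assms]] .
  then obtain w where w: "w * (1 - - (v * j)) = 1" using J_one_minus_left_inv by blast
  have vv: "v = 1 + v * j" using v by (simp add: algebra_simps)
  have "w * v = 1" using w vv by simp
  then have "w = 1 - j" using v by (metis mult.assoc mult_1_left mult_1_right)
  then show ?thesis using v \<open>w * v = 1\<close> by blast
qed

lemma J_not_one: "(1::'a::ring_1) \<notin> jacobson_radical"
proof
  assume "(1::'a) \<in> jacobson_radical"
  then obtain v where "v * (1 - 1) = (1::'a)" using J_one_minus_left_inv by blast
  then show False by simp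
qed

lemma geom_telescope:
  fixes z :: "'a::ring_1"
  shows "(\<Sum>i<k. z ^ i) * (1 - z) = 1 - z ^ k" "(1 - z) * (\<Sum>i<k. z ^ i) = 1 - z ^ k"
proof -
  show "(\<Sum>i<k. z ^ i) * (1 - z) = 1 - z ^ k"
  proof (induction k)
    case (Suc k)
    have "(\<Sum>i<Suc k. z ^ i) * (1 - z) = (\<Sum>i<k. z ^ i) * (1 - z) + z ^ k * (1 - z)"
      by (simp add: distrib_right)
    also have "\<dots> = 1 - z ^ k + (z ^ k - z ^ k * z)" using Suc by (simp add: right_diff_distrib)
    also have "\<dots> = 1 - z ^ Suc k" by (simp add: power_Suc2 power_commutes)
    finally show ?case .
  qed simp
  show "(1 - z) * (\<Sum>i<k. z ^ i) = 1 - z ^ k"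
  proof (induction k)
    case (Suc k)
    have "(1 - z) * (\<Sum>i<Suc k. z ^ i) = (1 - z) * (\<Sum>i<k. z ^ i) + (1 - z) * z ^ k"
      by (simp add: distrib_left)
    also have "\<dots> = 1 - z ^ k + (z ^ k - z * z ^ k)" using Suc by (simp add: left_diff_distrib)
    also have "\<dots> = 1 - z ^ Suc k" by (simp add: power_commutes)
    finally show ?case .
  qed simp
qed

lemma nil_mod_J_left_ideal:
  fixes N :: "'a::ring_1 set"
  assumes N: "left_ideal N" and nil: "\<And>x. x \<in> N \<Longrightarrow> \<exists>k. x ^ k \<in> jacobson_radical"
  shows "N \<subseteq> jacobson_radical"
proof
  fix x assume x: "x \<in> N"
  show "x \<in> jacobson_radical"
    unfolding jacobson_radical_def
  proof (rule InterI, rule ccontr)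
    fix M assume "M \<in> {I. maximal_left_ideal I}" and xM: "x \<notin> M"
    then have M: "maximal_left_ideal M" by simp
    have LM: "left_ideal M" using maximal_left_ideal_D(1)[OF M] .
    define M' where "M' = {m + a * x | m a. m \<in> M}"
    have "left_ideal M'"
      unfolding left_ideal_def M'_def
    proof (intro conjI ballI allI)
      show "0 \<in> {m + a * x |m a. m \<in> M}" using left_idealD(1)[OF LM] by (auto intro!: exI[of _ 0])
    next
      fix p q assume "p \<in> {m + a * x |m a. m \<in> M}" "q \<in> {m + a * x |m a. m \<in> M}"
      then obtain m1 a1 m2 a2 where "p = m1 + a1 * x" "q = m2 + a2 * x" "m1 \<in> M" "m2 \<in> M" by auto
      then show "p + q \<in> {m + a * x |m a. m \<in> M}"
        by (intro CollectI exI[of _ "m1 + m2"] exI[of _ "a1 + a2"])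
           (auto simp: algebra_simps intro: left_idealD(2)[OF LM])
    next
      fix b p assume "p \<in> {m + a * x |m a. m \<in> M}"
      then obtain m1 a1 where "p = m1 + a1 * x" "m1 \<in> M" by auto
      then show "b * p \<in> {m + a * x |m a. m \<in> M}"
        by (intro CollectI exI[of _ "b * m1"] exI[of _ "b * a1"])
           (auto simp: algebra_simps intro: left_idealD(3)[OF LM])
    qed
    moreover have "M \<subseteq> M'" unfolding M'_def
    proof
      fix m assume "m \<in> M" then show "m \<in> {m + a * x |m a. m \<in> M}"
        by (intro CollectI exI[of _ m] exI[of _ 0]) simp
    qed
    moreover have "x \<in> M'" unfolding M'_def using left_idealD(1)[OF LM]
      by (intro CollectI exI[of _ 0] exI[of _ 1]) simp
    ultimately have "M' = UNIV" using M xM unfolding maximal_left_ideal_def by blast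
    then obtain m a where ma: "1 = m + a * x" "m \<in> M" unfolding M'_def by blast
    define z where "z = a * x"
    have "z \<in> N" using left_idealD(3)[OF N x] z_def by simp
    then obtain k where "z ^ k \<in> jacobson_radical" using nil by blast
    then obtain v where v: "v * (1 - z ^ k) = 1" using J_one_minus_left_inv by blast
    have "m = 1 - z" using ma(1) z_def by (simp add: algebra_simps)
    then have "(v * (\<Sum>i<k. z ^ i)) * m = 1"
      using v geom_telescope(1)[of z k] by (simp add: mult.assoc)
    then have "1 \<in> M" using left_idealD(3)[OF LM ma(2)] by metis
    then show False using maximal_left_ideal_D(2)[OF M] by simp
  qed
qed


section \<open>Polynomials in one element\<close>

definition pows :: "'a::real_algebra_1 \<Rightarrow> 'a set" where
  "pows z = span (range (\<lambda>k. z ^ k))"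

definition pows1 :: "'a::real_algebra_1 \<Rightarrow> 'a set" where
  "pows1 z = span (range (\<lambda>k. z ^ Suc k))"

lemma pow_in_pows: "z ^ k \<in> pows z"
  unfolding pows_def by (rule span_base) auto

lemma one_in_pows: "1 \<in> pows z"
  using pow_in_pows[of z 0] by simp

lemma self_in_pows: "z \<in> pows z"
  using pow_in_pows[of z 1] by simp

lemma subspace_pows: "subspace (pows z)"
  unfolding pows_def by (rule subspace_span)

lemma subspace_pows1: "subspace (pows1 z)"
  unfolding pows1_def by (rule subspace_span)

lemma pows_mult_pow: assumes "p \<in> pows z" shows "p * z ^ k \<in> pows z \<and> z ^ k * p = p * z ^ k"
  using assms unfolding pows_def
proof (induction rule: span_induct_alt)
  case base then show ?case by (simp add: span_zero)
next
  case (step c x y)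
  then obtain j where x: "x = z ^ j" by auto
  have "(c *\<^sub>R x + y) * z ^ k = c *\<^sub>R z ^ (j + k) + y * z ^ k"
    by (simp add: x distrib_right power_add)
  moreover have "z ^ (j + k) \<in> span (range (\<lambda>k. z ^ k))" by (intro span_base) auto
  ultimately have "(c *\<^sub>R x + y) * z ^ k \<in> span (range (\<lambda>k. z ^ k))"
    using step by (auto intro: span_add span_scale)
  moreover have "z ^ k * (c *\<^sub>R x + y) = (c *\<^sub>R x + y) * z ^ k"
    using step by (simp add: x distrib_right distrib_left power_commutes power_add[symmetric] add.commute)
  ultimately show ?case by simp
qed

lemma pows_mult: assumes "p \<in> pows z" "q \<in> pows z" shows "p * q \<in> pows z \<and> p * q = q * p"
  using assms(2) unfolding pows_def
proof (induction rule: span_induct_alt)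
  case base then show ?case by (simp add: span_zero)
next
  case (step c x y)
  then obtain j where x: "x = z ^ j" by auto
  have "p * (c *\<^sub>R x + y) = c *\<^sub>R (p * z ^ j) + p * y" by (simp add: x distrib_left)
  moreover have "p * z ^ j \<in> span (range (\<lambda>k. z ^ k))" "z ^ j * p = p * z ^ j"
    using pows_mult_pow[OF assms(1), of j] by (auto simp: pows_def)
  ultimately show ?case using step
    by (auto intro!: span_add span_scale simp: x distrib_right)
qed

lemma pows_mult_closed: "p \<in> pows z \<Longrightarrow> q \<in> pows z \<Longrightarrow> p * q \<in> pows z"
  using pows_mult by blast

lemma pows_commute: "p \<in> pows z \<Longrightarrow> q \<in> pows z \<Longrightarrow> p * q = q * p"
  using pows_mult by blast

lemma pows_power: "p \<in> pows z \<Longrightarrow> p ^ k \<in> pows z"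
  by (induction k) (auto simp: one_in_pows pows_mult_closed)

lemma pows_scale: "p \<in> pows z \<Longrightarrow> c *\<^sub>R p \<in> pows z"
  unfolding pows_def by (rule span_scale)

lemma pows_add: "p \<in> pows z \<Longrightarrow> q \<in> pows z \<Longrightarrow> p + q \<in> pows z"
  unfolding pows_def by (rule span_add)

lemma pows_sum: "(\<And>i. i \<in> S \<Longrightarrow> f i \<in> pows z) \<Longrightarrow> sum f S \<in> pows z"
  unfolding pows_def by (rule span_sum)

lemma pows1_times: assumes "p \<in> pows z" shows "z * p \<in> pows1 z"
  using assms unfolding pows_def
proof (induction rule: span_induct_alt)
  case base then show ?case by (simp add: pows1_def span_zero)
next
  case (step c x y)
  then obtain j where x: "x = z ^ j" by auto
  have "z ^ Suc j \<in> pows1 z" unfolding pows1_def by (intro span_base) auto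
  then show ?case using step unfolding pows1_def
    by (auto intro!: span_add span_scale simp: x distrib_left)
qed

lemma mult_power_commute:
  fixes a b :: "'a::monoid_mult"
  assumes "a * b = b * a" shows "(a * b) ^ k = a ^ k * b ^ k"
proof (induction k)
  case (Suc k)
  have bk: "b ^ k * a = a * b ^ k"
  proof (induction k)
    case (Suc k) then show ?case using assms by (simp add: mult.assoc[symmetric]) (metis mult.assoc)
  qed simp
  have "(a * b) ^ Suc k = a * b * (a ^ k * b ^ k)" using Suc by simp
  also have "\<dots> = a * (b * a ^ k) * b ^ k" by (simp add: mult.assoc)
  also have "b * a ^ k = a ^ k * b"
  proof (induction k)
    case (Suc k) then show ?case using assms by (simp add: mult.assoc[symmetric]) (metis mult.assoc)
  qed simp
  finally show ?case by (simp add: mult.assoc power_commutes)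
qed simp

section \<open>Finite dimensionality\<close>

lemma fds_obtain: assumes "finite_dim_space TYPE('a::real_vector)"
  obtains S :: "'a::real_vector set" where "finite S" "span S = UNIV"
  using assms unfolding finite_dim_space_def by blast

lemma fds_basis: assumes "finite_dim_space TYPE('a::real_vector)"
  obtains B :: "'a::real_vector set" where "finite B" "independent B" "span B = UNIV"
proof -
  obtain S :: "'a set" where S: "finite S" "span S = UNIV" using fds_obtain[OF assms] by blast
  obtain B where B: "B \<subseteq> S" "independent B" "S \<subseteq> span B" using maximal_independent_subset[of S] by blast
  have "span B = UNIV" using B S by (metis span_eq top.extremum_uniqueI span_mono span_span)
  moreover have "finite B" using B S finite_subset by blast
  ultimately show ?thesis using that B by blast
qed

lemma fds_independent_finite:
  assumes "finite_dim_space TYPE('a::real_vector)" "independent (B :: 'a set)"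
  shows "finite B"
proof -
  obtain S :: "'a set" where S: "finite S" "span S = UNIV" using fds_obtain[OF assms(1)] by blast
  show ?thesis using independent_span_bound[OF S(1) assms(2)] S(2) by auto
qed

lemma power_relation_shift:
  fixes z :: "'a::real_algebra_1"
  shows "\<forall>c m. (\<exists>k\<le>D. c k \<noteq> 0) \<longrightarrow> z ^ m * (\<Sum>k\<le>D. c k *\<^sub>R z ^ k) = 0 \<longrightarrow>
           (\<exists>n q. q \<in> pows z \<and> z ^ n = z ^ Suc n * q)"
proof (induction D)
  case 0
  show ?case
  proof (intro allI impI)
    fix c m assume "\<exists>k\<le>0. c k \<noteq> (0::real)" "z ^ m * (\<Sum>k\<le>0. c k *\<^sub>R z ^ k) = 0"
    then have "z ^ m = 0" by simp
    then show "\<exists>n q. q \<in> pows z \<and> z ^ n = z ^ Suc n * q"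
      by (intro exI[of _ m] exI[of _ 0]) (auto simp: pows_def span_zero)
  qed
next
  case (Suc D)
  show ?case
  proof (intro allI impI)
    fix c m assume ne: "\<exists>k\<le>Suc D. c k \<noteq> (0::real)" and rel: "z ^ m * (\<Sum>k\<le>Suc D. c k *\<^sub>R z ^ k) = 0"
    define w where "w = (\<Sum>k\<le>D. c (Suc k) *\<^sub>R z ^ k)"
    have wp: "w \<in> pows z" unfolding w_def by (intro pows_sum pows_scale pow_in_pows)
    have zw: "z * w = (\<Sum>k\<le>D. c (Suc k) *\<^sub>R z ^ Suc k)"
      unfolding w_def by (simp add: sum_distrib_left mult_scaleR_right)
    have split: "(\<Sum>k\<le>Suc D. c k *\<^sub>R z ^ k) = c 0 *\<^sub>R 1 + z * w"
      unfolding zw by (subst sum.atMost_Suc_shift) simp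
    show "\<exists>n q. q \<in> pows z \<and> z ^ n = z ^ Suc n * q"
    proof (cases "c 0 = 0")
      case False
      from rel have "z ^ m * (c 0 *\<^sub>R 1 + z * w) = 0" by (simp only: split)
      then have "z ^ m * (c 0 *\<^sub>R 1) + z ^ m * (z * w) = 0" by (simp only: distrib_left)
      moreover have "z ^ m * (z * w) = z ^ Suc m * w" by (simp only: power_Suc2 mult.assoc)
      ultimately have "c 0 *\<^sub>R z ^ m + z ^ Suc m * w = 0" by simp
      then have "c 0 *\<^sub>R z ^ m = - (z ^ Suc m * w)" by (simp add: eq_neg_iff_add_eq_0)
      then have eq: "c 0 *\<^sub>R z ^ m = - (z ^ Suc m * w)" .
      have "z ^ m = inverse (c 0) *\<^sub>R (c 0 *\<^sub>R z ^ m)" using False by simp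
      also have "\<dots> = z ^ Suc m * ((- inverse (c 0)) *\<^sub>R w)" unfolding eq
        by (simp add: mult_scaleR_right)
      finally have "z ^ m = z ^ Suc m * ((- inverse (c 0)) *\<^sub>R w)" .
      moreover have "(- inverse (c 0)) *\<^sub>R w \<in> pows z" using pows_scale[OF wp] .
      ultimately show ?thesis by blast
    next
      case True
      from rel have "z ^ m * (c 0 *\<^sub>R 1 + z * w) = 0" by (simp only: split)
      then have "z ^ m * (z * w) = 0" using True by simp
      moreover have "z ^ m * (z * w) = z ^ Suc m * w" by (simp only: power_Suc2 mult.assoc)
      ultimately have "z ^ Suc m * w = 0" by simp
      moreover have "\<exists>k\<le>D. c (Suc k) \<noteq> 0"
      proof -
        obtain k where k: "k \<le> Suc D" "c k \<noteq> 0" using ne by blast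
        have "k \<noteq> 0"
        proof
          assume "k = 0" then show False using k(2) True by simp
        qed
        then obtain k' where "k = Suc k'" by (cases k) auto
        then show ?thesis using k by auto
      qed
      ultimately show ?thesis using Suc.IH[rule_format, of "\<lambda>k. c (Suc k)" "Suc m"] unfolding w_def by blast
    qed
  qed
qed

lemma power_relation:
  fixes z :: "'a::real_algebra_1"
  assumes fd: "finite_dim_space TYPE('a)"
  shows "\<exists>n q. q \<in> pows z \<and> z ^ n = z ^ Suc n * q"
proof -
  obtain S :: "'a set" where S: "finite S" "span S = UNIV" using fds_obtain[OF fd] by blast
  define D where "D = card S"
  show ?thesis
  proof (cases "inj_on (\<lambda>k. z ^ k) {..D}")
    case False
    then obtain i j where ij: "i \<le> D" "j \<le> D" "i \<noteq> j" "z ^ i = z ^ j" unfolding inj_on_def by auto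
    then obtain a b where ab: "a < b" "z ^ a = z ^ b" by (metis nat_neq_iff)
    have "Suc a + (b - Suc a) = b" using ab(1) by simp
    then have "z ^ Suc a * z ^ (b - Suc a) = z ^ b" by (metis power_add)
    then have "z ^ a = z ^ Suc a * z ^ (b - Suc a)" using ab(2) by simp
    then show ?thesis by (intro exI[of _ a] exI[of _ "z ^ (b - Suc a)"]) (auto simp: pow_in_pows)
  next
    case True
    define P where "P = (\<lambda>k. z ^ k) ` {..D}"
    have cardP: "card P = Suc D" unfolding P_def using card_image[OF True] by simp
    have "dependent P"
    proof (rule ccontr)
      assume "\<not> dependent P"
      then have "card P \<le> card S" using independent_span_bound[OF S(1)] S(2) by auto
      then show False using cardP D_def by simp
    qed
    moreover have "finite P" unfolding P_def by simp
    ultimately obtain u where u: "\<exists>v\<in>P. u v \<noteq> 0" "(\<Sum>v\<in>P. u v *\<^sub>R v) = 0"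
      using dependent_finite by blast
    define c where "c k = u (z ^ k)" for k
    have "(\<Sum>k\<le>D. c k *\<^sub>R z ^ k) = 0"
      using u(2) unfolding P_def c_def by (simp add: sum.reindex[OF True])
    moreover have "\<exists>k\<le>D. c k \<noteq> 0" using u(1) unfolding P_def c_def by auto
    ultimately show ?thesis using power_relation_shift[of D z, rule_format, of c 0] by simp
  qed
qed

lemma idempotent_from_power:
  fixes z :: "'a::real_algebra_1"
  assumes fd: "finite_dim_space TYPE('a)"
  shows "\<exists>n E. n \<ge> 1 \<and> E * E = E \<and> z ^ n * E = z ^ n \<and> E \<in> pows z \<and> E \<in> pows1 z
     \<and> (\<exists>q\<in>pows z. E = q * z ^ n)"
proof -
  obtain n0 q where q: "q \<in> pows z" "z ^ n0 = z ^ Suc n0 * q" using power_relation[OF fd] by blast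
  define n where "n = Suc n0"
  have zq: "z * q = q * z" using pows_commute[OF self_in_pows q(1)] .
  define P where "P = z * q"
  have Pp: "P \<in> pows z" unfolding P_def by (intro pows_mult_closed self_in_pows q(1))
  have zP: "z ^ n * P = z ^ n"
  proof -
    have "z ^ n * P = (z ^ n * z) * q" unfolding P_def by (simp add: mult.assoc)
    also have "\<dots> = z * (z ^ n * q)" by (simp add: power_commutes mult.assoc)
    also have "\<dots> = z * (z ^ Suc n0 * q)" unfolding n_def ..
    also have "\<dots> = z ^ n" using q(2) n_def by simp
    finally show ?thesis .
  qed
  have zPk: "z ^ n * P ^ k = z ^ n" for k
  proof (induction k)
    case (Suc k)
    have "z ^ n * P ^ Suc k = (z ^ n * P ^ k) * P" by (simp only: power_Suc2 mult.assoc)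
    then show ?case using Suc zP by simp
  qed simp
  define E where "E = P ^ n"
  have Eq: "E = q ^ n * z ^ n"
    unfolding E_def P_def using mult_power_commute[OF zq, of n]
      pows_commute[OF pows_power[OF self_in_pows[of z], where k=n] pows_power[OF q(1), of n]] by simp
  have Ep: "E \<in> pows z" unfolding E_def by (intro pows_power Pp)
  have EE: "E * E = E"
  proof -
    have "E * E = q ^ n * (z ^ n * P ^ n)" unfolding E_def by (simp add: Eq[unfolded E_def] mult.assoc)
    also have "\<dots> = E" using zPk Eq by simp
    finally show ?thesis .
  qed
  have E1: "E \<in> pows1 z"
  proof -
    have "E = q ^ n * (z * z ^ n0)" using Eq by (simp add: n_def)
    also have "\<dots> = (q ^ n * z) * z ^ n0" by (simp add: mult.assoc)
    also have "q ^ n * z = z * q ^ n" using pows_commute[OF pows_power[OF q(1)] self_in_pows] .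
    finally have "E = z * (q ^ n * z ^ n0)" by (simp add: mult.assoc)
    then show ?thesis using pows1_times pows_mult_closed[OF pows_power[OF q(1)] pow_in_pows] by metis
  qed
  show ?thesis
    using EE zPk[of n] Ep E1 Eq pows_power[OF q(1), of n] unfolding E_def n_def
    by (intro exI[of _ n] exI[of _ E]) (auto simp: E_def n_def)
qed

lemma J_nilpotent:
  fixes x :: "'a::real_algebra_1"
  assumes fd: "finite_dim_space TYPE('a)" and x: "x \<in> jacobson_radical"
  shows "\<exists>n. x ^ n = 0"
proof -
  obtain n q where q: "q \<in> pows x" "x ^ n = x ^ Suc n * q" using power_relation[OF fd] by blast
  have "q * x \<in> jacobson_radical" using J_mult[OF x] .
  then obtain v where v: "(1 - q * x) * v = 1" using J_one_minus_inv by blast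
  have "x ^ n * (1 - q * x) = 0"
  proof -
    have "x ^ n * (q * x) = x ^ n * (x * q)"
      using pows_commute[OF q(1) self_in_pows] by simp
    also have "\<dots> = x ^ Suc n * q" by (simp only: power_Suc2 mult.assoc)
    finally have "x ^ n * (q * x) = x ^ Suc n * q" .
    have "x ^ n * (1 - q * x) = x ^ n - x ^ n * (q * x)" by (simp add: right_diff_distrib)
    also have "\<dots> = x ^ n - x ^ Suc n * q" using \<open>x ^ n * (q * x) = x ^ Suc n * q\<close> by simp
    also have "\<dots> = 0" by (simp only: q(2)[symmetric] diff_self)
    finally show ?thesis .
  qed
  have "x ^ n = x ^ n * ((1 - q * x) * v)" using v by simp
  also have "\<dots> = (x ^ n * (1 - q * x)) * v" by (simp only: mult.assoc)
  finally have "x ^ n = 0" using \<open>x ^ n * (1 - q * x) = 0\<close> by simp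
  then show ?thesis by blast
qed


section \<open>Traces\<close>

definition trace_wrt :: "'a::real_vector set \<Rightarrow> ('a \<Rightarrow> 'a) \<Rightarrow> real" where
  "trace_wrt B f = (\<Sum>b\<in>B. representation B (f b) b)"

definition is_basis :: "'a::real_vector set \<Rightarrow> bool" where
  "is_basis B \<longleftrightarrow> finite B \<and> independent B \<and> span B = UNIV"

definition the_basis :: "'a::real_vector set" where
  "the_basis = (SOME B. is_basis B)"

definition ltrace :: "'a::real_algebra_1 \<Rightarrow> real" where
  "ltrace z = trace_wrt the_basis (\<lambda>x. z * x)"

lemma the_basis: "finite_dim_space TYPE('a::real_vector) \<Longrightarrow> is_basis (the_basis :: 'a set)"
  unfolding the_basis_def by (rule someI_ex) (metis fds_basis is_basis_def)

lemma rep_sum_eq: "is_basis B \<Longrightarrow> (\<Sum>b\<in>B. representation B v b *\<^sub>R b) = v"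
  unfolding is_basis_def by (intro sum_representation_eq) auto

lemma rep_add: "is_basis B \<Longrightarrow> representation B (u + v) b = representation B u b + representation B v b"
  unfolding is_basis_def by (simp add: representation_add)

lemma rep_scale: "is_basis B \<Longrightarrow> representation B (c *\<^sub>R v) b = c * representation B v b"
  unfolding is_basis_def by (simp add: representation_scale)

lemma rep_sum: "is_basis B \<Longrightarrow> representation B (sum f I) b = (\<Sum>i\<in>I. representation B (f i) b)"
  unfolding is_basis_def by (simp add: representation_sum)

lemma rep_self: "is_basis B \<Longrightarrow> b \<in> B \<Longrightarrow> representation B b b = 1"
  unfolding is_basis_def by (simp add: representation_basis)

lemma trace_wrt_expand:
  assumes B: "is_basis B" and f: "linear f"
  shows "trace_wrt B (\<lambda>x. f (g x)) = (\<Sum>b\<in>B. \<Sum>c\<in>B. representation B (g b) c * representation B (f c) b)"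
proof -
  have "trace_wrt B (\<lambda>x. f (g x)) = (\<Sum>b\<in>B. representation B (f (\<Sum>c\<in>B. representation B (g b) c *\<^sub>R c)) b)"
    unfolding trace_wrt_def using rep_sum_eq[OF B] by simp
  also have "\<dots> = (\<Sum>b\<in>B. \<Sum>c\<in>B. representation B (g b) c * representation B (f c) b)"
    by (simp add: linear_sum[OF f] linear_scale[OF f] rep_sum[OF B] rep_scale[OF B])
  finally show ?thesis .
qed

lemma trace_wrt_comm:
  assumes B: "is_basis B" and f: "linear f" and g: "linear g"
  shows "trace_wrt B (\<lambda>x. f (g x)) = trace_wrt B (\<lambda>x. g (f x))"
  unfolding trace_wrt_expand[OF B f] trace_wrt_expand[OF B g]
  by (subst sum.swap) (simp add: mult.commute)

lemma trace_wrt_indep: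
  assumes B: "is_basis B" and C: "is_basis C" and f: "linear f"
  shows "trace_wrt B f = trace_wrt C f"
proof -
  have "trace_wrt B f = (\<Sum>b\<in>B. representation B (f (\<Sum>c\<in>C. representation C b c *\<^sub>R c)) b)"
    unfolding trace_wrt_def using rep_sum_eq[OF C] by simp
  also have "\<dots> = (\<Sum>b\<in>B. \<Sum>c\<in>C. representation C b c * representation B (f c) b)"
    by (simp add: linear_sum[OF f] linear_scale[OF f] rep_sum[OF B] rep_scale[OF B])
  also have "\<dots> = (\<Sum>c\<in>C. \<Sum>b\<in>B. representation B (f c) b * representation C b c)"
    by (subst sum.swap) (simp add: mult.commute)
  also have "\<dots> = (\<Sum>c\<in>C. representation C (\<Sum>b\<in>B. representation B (f c) b *\<^sub>R b) c)"
    by (simp add: rep_sum[OF C] rep_scale[OF C])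
  also have "\<dots> = trace_wrt C f"
    unfolding trace_wrt_def using rep_sum_eq[OF B] by simp
  finally show ?thesis .
qed

lemma linear_lmult: "linear (\<lambda>x. (z::'a::real_algebra_1) * x)"
  by (rule linearI) (auto simp: distrib_left mult_scaleR_right)

lemma linear_rmult: "linear (\<lambda>x. x * (z::'a::real_algebra_1))"
  by (rule linearI) (auto simp: distrib_right mult_scaleR_left)

lemma ltrace_wrt:
  assumes fd: "finite_dim_space TYPE('a::real_algebra_1)" and B: "is_basis (B::'a set)"
  shows "ltrace z = trace_wrt B (\<lambda>x. z * x)"
  unfolding ltrace_def by (rule trace_wrt_indep[OF the_basis[OF fd] B linear_lmult])

lemma ltrace_add:
  assumes fd: "finite_dim_space TYPE('a::real_algebra_1)"
  shows "ltrace (z + w :: 'a) = ltrace z + ltrace w"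
  unfolding ltrace_def trace_wrt_def using the_basis[OF fd]
  by (simp add: distrib_right rep_add sum.distrib)

lemma ltrace_scale:
  assumes fd: "finite_dim_space TYPE('a::real_algebra_1)"
  shows "ltrace (c *\<^sub>R z :: 'a) = c * ltrace z"
  unfolding ltrace_def trace_wrt_def using the_basis[OF fd]
  by (simp add: rep_scale sum_distrib_left)

lemma ltrace_zero: "ltrace (0::'a::real_algebra_1) = 0"
  unfolding ltrace_def trace_wrt_def by (simp add: representation_zero)

lemma ltrace_diff:
  assumes fd: "finite_dim_space TYPE('a::real_algebra_1)"
  shows "ltrace (z - w :: 'a) = ltrace z - ltrace w"
  using ltrace_add[OF fd, of "z - w" w] by simp

lemma ltrace_sum:
  assumes fd: "finite_dim_space TYPE('a::real_algebra_1)"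
  shows "ltrace (sum (f :: _ \<Rightarrow> 'a) I) = (\<Sum>i\<in>I. ltrace (f i))"
  by (induction I rule: infinite_finite_induct) (auto simp: ltrace_zero ltrace_add[OF fd])

lemma linear_ltrace:
  assumes fd: "finite_dim_space TYPE('a::real_algebra_1)"
  shows "linear (ltrace :: 'a \<Rightarrow> real)"
  by (rule linearI) (auto simp: ltrace_add[OF fd] ltrace_scale[OF fd])

lemma ltrace_comm:
  assumes fd: "finite_dim_space TYPE('a::real_algebra_1)"
  shows "ltrace (x * y :: 'a) = ltrace (y * x)"
proof -
  have 1: "(\<lambda>w. x * (y * w)) = (\<lambda>w. (x * y) * w)" by (simp add: mult.assoc)
  have 2: "(\<lambda>w. y * (x * w)) = (\<lambda>w. (y * x) * w)" by (simp add: mult.assoc)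
  show ?thesis
    using trace_wrt_comm[OF the_basis[OF fd] linear_lmult[of x] linear_lmult[of y]]
    unfolding ltrace_def 1 2 .
qed

lemma ltrace_idempotent_pos:
  assumes fd: "finite_dim_space TYPE('a::real_algebra_1)"
    and e: "e * e = (e::'a)" "e \<noteq> 0"
  shows "ltrace e > 0"
proof -
  define V where "V = range (\<lambda>x. e * x) \<union> range (\<lambda>x. x - e * x)"
  obtain B where B: "B \<subseteq> V" "independent B" "V \<subseteq> span B"
    using maximal_independent_subset[of V] by blast
  have "span B = UNIV"
  proof -
    have "x \<in> span B" for x
    proof -
      have "e * x \<in> span B" "x - e * x \<in> span B" using B(3) unfolding V_def by auto
      then show ?thesis using span_add by fastforce
    qed
    then show ?thesis by auto
  qed
  then have isB: "is_basis B" using fds_independent_finite[OF fd B(2)] B(2) by (auto simp: is_basis_def)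
  have eb: "e * b = b \<or> e * b = 0" if "b \<in> B" for b
  proof -
    have "b \<in> V" using that B(1) by auto
    then show ?thesis unfolding V_def
      by (auto simp: mult.assoc[symmetric] e(1) right_diff_distrib)
  qed
  have terms: "representation B (e * b) b = (if e * b = b then 1 else 0)" if "b \<in> B" for b
    using eb[OF that] rep_self[OF isB that] by (auto simp: representation_zero)
  obtain b0 where b0: "b0 \<in> B" "e * b0 \<noteq> 0"
  proof (rule ccontr)
    assume "\<not> thesis"
    then have "\<forall>b\<in>B. e * b = 0" using that by blast
    then have "e * x = 0" for x
    proof -
      have "x \<in> span B" using \<open>span B = UNIV\<close> by auto
      then show ?thesis
      proof (induction rule: span_induct_alt)
        case (step c x y) then show ?case using \<open>\<forall>b\<in>B. e * b = 0\<close> by (simp add: distrib_left mult_scaleR_right)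
      qed simp
    qed
    then show False using e(2) by (metis mult_1_right)
  qed
  have "ltrace e = (\<Sum>b\<in>B. representation B (e * b) b)"
    unfolding ltrace_wrt[OF fd isB] trace_wrt_def ..
  also have "\<dots> = (\<Sum>b\<in>B. (if e * b = b then 1 else 0))" using terms by simp
  also have "\<dots> > 0"
  proof -
    have "e * b0 = b0" using eb[OF b0(1)] b0(2) by auto
    then have "(1::real) \<le> (\<Sum>b\<in>B. (if e * b = b then 1 else 0))"
      using member_le_sum[of b0 B "\<lambda>b. if e * b = b then 1 else (0::real)"] b0(1) isB
      by (auto simp: is_basis_def)
    then show ?thesis by linarith
  qed
  finally show ?thesis .
qed

lemma ltrace_nilpotent:
  assumes fd: "finite_dim_space TYPE('a::real_algebra_1)"
    and nil: "z ^ n = (0::'a)"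
  shows "ltrace z = 0"
proof -
  have claim: "k \<le> n \<Longrightarrow> \<exists>B. finite B \<and> independent B \<and> B \<subseteq> range (\<lambda>x. z ^ (n - k) * x)
      \<and> range (\<lambda>x. z ^ (n - k) * x) \<subseteq> span B \<and> (\<forall>b\<in>B. z * b \<in> span (B - {b}))" for k
  proof (induction k)
    case 0
    show ?case using nil by (intro exI[of _ "{}"]) (auto simp: span_zero independent_empty)
  next
    case (Suc k)
    then obtain B where B: "finite B" "independent B" "B \<subseteq> range (\<lambda>x. z ^ (n - k) * x)"
      "range (\<lambda>x. z ^ (n - k) * x) \<subseteq> span B" "\<forall>b\<in>B. z * b \<in> span (B - {b})" by auto
    define m where "m = n - Suc k"
    have nk: "n - k = Suc m" using Suc.prems unfolding m_def by simp
    have sub: "range (\<lambda>x. z ^ (n - k) * x) \<subseteq> range (\<lambda>x. z ^ m * x)"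
    proof
      fix w assume "w \<in> range (\<lambda>x. z ^ (n - k) * x)"
      then obtain x where "w = z ^ Suc m * x" unfolding nk by auto
      moreover have "z ^ Suc m * x = z ^ m * (z * x)" by (simp only: power_Suc2 mult.assoc)
      ultimately show "w \<in> range (\<lambda>x. z ^ m * x)" by auto
    qed
    obtain B' where B': "B \<subseteq> B'" "B' \<subseteq> range (\<lambda>x. z ^ m * x)" "independent B'"
        "range (\<lambda>x. z ^ m * x) \<subseteq> span B'"
      using maximal_independent_subset_extend[of B "range (\<lambda>x. z ^ m * x)"] B(2,3) sub by blast
    have "\<forall>b\<in>B'. z * b \<in> span (B' - {b})"
    proof
      fix b assume b: "b \<in> B'"
      show "z * b \<in> span (B' - {b})"
      proof (cases "b \<in> B")
        case True
        then show ?thesis using B(5) span_mono[of "B - {b}" "B' - {b}"] B'(1) by blast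
      next
        case False
        obtain y where y: "b = z ^ m * y" using b B'(2) by auto
        have "z * b = z ^ (n - k) * y" unfolding nk y by (simp add: mult.assoc)
        then have "z * b \<in> span B" using B(4) by auto
        moreover have "B \<subseteq> B' - {b}" using B'(1) False by auto
        ultimately show ?thesis using span_mono by blast
      qed
    qed
    then show ?case using B' fds_independent_finite[OF fd B'(3)] unfolding m_def by auto
  qed
  obtain B where B: "finite B" "independent B" "range (\<lambda>x. z ^ (n - n) * x) \<subseteq> span B"
    "\<forall>b\<in>B. z * b \<in> span (B - {b})" using claim[of n] by auto
  have isB: "is_basis B" using B by (auto simp: is_basis_def)
  have "representation B (z * b) b = 0" if b: "b \<in> B" for b
  proof -
    have "representation B (z * b) = representation (B - {b}) (z * b)"
      using representation_extend[OF B(2)] B(4) b by blast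
    then show ?thesis using representation_ne_zero[of "B - {b}" "z * b" b] by auto
  qed
  then show ?thesis unfolding ltrace_wrt[OF fd isB] trace_wrt_def by simp
qed


section \<open>The trace form and the radical\<close>

lemma ltrace_pows1:
  assumes fd: "finite_dim_space TYPE('a::real_algebra_1)"
    and zk: "\<And>k. ltrace ((z::'a) ^ Suc k) = 0"
    and p: "p \<in> pows1 z"
  shows "ltrace p = 0"
  using p unfolding pows1_def
proof (induction rule: span_induct_alt)
  case base then show ?case by (simp add: ltrace_zero)
next
  case (step c x y) then show ?case using zk by (auto simp: ltrace_add[OF fd] ltrace_scale[OF fd])
qed

lemma lemma_N:
  assumes fd: "finite_dim_space TYPE('a::real_algebra_1)"
    and zk: "\<And>k. ltrace ((z::'a) ^ Suc k) = 0"
  shows "\<exists>n. z ^ n = 0"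
proof -
  obtain n E where E: "n \<ge> 1" "E * E = E" "z ^ n * E = z ^ n" "E \<in> pows1 z"
    using idempotent_from_power[OF fd, of z] by blast
  have "ltrace E = 0" using ltrace_pows1[OF fd zk E(4)] .
  then have "E = 0" using ltrace_idempotent_pos[OF fd E(2)] by fastforce
  then show ?thesis using E(3) by auto
qed

lemma J_char:
  assumes fd: "finite_dim_space TYPE('a::real_algebra_1)"
  shows "(jacobson_radical :: 'a set) = {x. \<forall>y. ltrace (x * y) = 0}"
proof
  show "(jacobson_radical :: 'a set) \<subseteq> {x. \<forall>y. ltrace (x * y) = 0}"
  proof (safe)
    fix x y :: 'a assume x: "x \<in> jacobson_radical"
    have "y * x \<in> jacobson_radical" using J_mult[OF x] .
    then obtain n where "(y * x) ^ n = 0" using J_nilpotent[OF fd] by blast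
    then have "ltrace (y * x) = 0" using ltrace_nilpotent[OF fd] by blast
    then show "ltrace (x * y) = 0" using ltrace_comm[OF fd] by metis
  qed
next
  define R where "R = {x::'a. \<forall>y. ltrace (x * y) = 0}"
  have "left_ideal R"
    unfolding left_ideal_def R_def
  proof (intro conjI ballI allI)
    show "0 \<in> {x::'a. \<forall>y. ltrace (x * y) = 0}" by (simp add: ltrace_zero)
  next
    fix x y assume "x \<in> {x::'a. \<forall>y. ltrace (x * y) = 0}" "y \<in> {x::'a. \<forall>y. ltrace (x * y) = 0}"
    then show "x + y \<in> {x::'a. \<forall>y. ltrace (x * y) = 0}" by (simp add: distrib_right ltrace_add[OF fd])
  next
    fix a x assume x: "x \<in> {x::'a. \<forall>y. ltrace (x * y) = 0}"
    show "a * x \<in> {x::'a. \<forall>y. ltrace (x * y) = 0}"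
    proof (safe)
      fix y
      have "ltrace (a * x * y) = ltrace (x * (y * a))"
        using ltrace_comm[OF fd, of a "x * y"] by (simp add: mult.assoc)
      then show "ltrace (a * x * y) = 0" using x by simp
    qed
  qed
  moreover have "\<exists>k. x ^ k \<in> jacobson_radical" if x: "x \<in> R" for x
  proof -
    have "ltrace (x ^ Suc k) = 0" for k using x unfolding R_def by (simp add: power_Suc)
    then obtain n where "x ^ n = 0" using lemma_N[OF fd] by blast
    then show ?thesis using J_zero by metis
  qed
  ultimately have "R \<subseteq> jacobson_radical" by (rule nil_mod_J_left_ideal)
  then show "{x::'a. \<forall>y. ltrace (x * y) = 0} \<subseteq> jacobson_radical" unfolding R_def .
qed

lemma J_trace:
  assumes fd: "finite_dim_space TYPE('a::real_algebra_1)"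
  shows "(x::'a) \<in> jacobson_radical \<longleftrightarrow> (\<forall>y. ltrace (x * y) = 0)"
  using J_char[OF fd] by auto

lemma J_right_mult:
  assumes fd: "finite_dim_space TYPE('a::real_algebra_1)" and x: "(x::'a) \<in> jacobson_radical"
  shows "x * a \<in> jacobson_radical"
  using x unfolding J_trace[OF fd] by (simp add: mult.assoc)

lemma J_ltrace:
  assumes fd: "finite_dim_space TYPE('a::real_algebra_1)" and x: "(x::'a) \<in> jacobson_radical"
  shows "ltrace x = 0"
  using x unfolding J_trace[OF fd] by (metis mult_1_right)


section \<open>Dual pairs for the trace form\<close>

definition tf :: "'a::real_algebra_1 \<Rightarrow> 'a \<Rightarrow> real" where
  "tf x y = ltrace (x * y)"

context
  fixes dummy :: "'a::real_algebra_1 itself"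
  assumes fd: "finite_dim_space TYPE('a)"
begin

lemma tf_sym: "tf (x::'a) y = tf y x"
  unfolding tf_def using ltrace_comm[OF fd] .

lemma tf_add_left: "tf ((x::'a) + y) z = tf x z + tf y z"
  unfolding tf_def by (simp add: distrib_right ltrace_add[OF fd])
lemma tf_add_right: "tf (z::'a) (x + y) = tf z x + tf z y"
  unfolding tf_def by (simp add: distrib_left ltrace_add[OF fd])
lemma tf_diff_left: "tf ((x::'a) - y) z = tf x z - tf y z"
  unfolding tf_def by (simp add: left_diff_distrib ltrace_diff[OF fd])
lemma tf_diff_right: "tf (z::'a) (x - y) = tf z x - tf z y"
  unfolding tf_def by (simp add: right_diff_distrib ltrace_diff[OF fd])
lemma tf_scale_left: "tf (c *\<^sub>R (x::'a)) z = c * tf x z"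
  unfolding tf_def by (simp add: ltrace_scale[OF fd])
lemma tf_scale_right: "tf (z::'a) (c *\<^sub>R x) = c * tf z x"
  unfolding tf_def by (simp add: ltrace_scale[OF fd])
lemma tf_sum_left: "tf (sum (f::_\<Rightarrow>'a) I) z = (\<Sum>i\<in>I. tf (f i) z)"
  unfolding tf_def by (simp add: sum_distrib_right ltrace_sum[OF fd])
lemma tf_sum_right: "tf (z::'a) (sum f I) = (\<Sum>i\<in>I. tf z (f i))"
  unfolding tf_def by (simp add: sum_distrib_left ltrace_sum[OF fd])
lemma tf_J_left: "(x::'a) \<in> jacobson_radical \<Longrightarrow> tf x y = 0"
  unfolding tf_def using J_trace[OF fd] by blast
lemma tf_J_right: "(x::'a) \<in> jacobson_radical \<Longrightarrow> tf y x = 0"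
  using tf_J_left tf_sym by metis
lemma J_tf: "(\<And>y. tf (x::'a) y = 0) \<Longrightarrow> x \<in> jacobson_radical"
  unfolding tf_def using J_trace[OF fd] by blast
lemma J_tf': "(\<And>y. tf y (x::'a) = 0) \<Longrightarrow> x \<in> jacobson_radical"
  using J_tf tf_sym by metis

lemma linear_tf_left: "linear (\<lambda>x. tf (x::'a) y)"
  by (rule linearI) (simp_all add: tf_add_left tf_scale_left)
lemma linear_tf_right: "linear (\<lambda>y. tf (x::'a) y)"
  by (rule linearI) (simp_all add: tf_add_right tf_scale_right)

lemma J_subspace: "subspace (jacobson_radical :: 'a set)"
  unfolding subspace_def using J_zero J_add J_scaleR by blast

definition spanJ :: "'a set \<Rightarrow> 'a set" where
  "spanJ B = {s + r | s r. s \<in> span B \<and> r \<in> jacobson_radical}"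

definition indepJ :: "'a set \<Rightarrow> bool" where
  "indepJ B \<longleftrightarrow> (\<forall>u. (\<Sum>b\<in>B. u b *\<^sub>R b) \<in> jacobson_radical \<longrightarrow> (\<forall>b\<in>B. u b = 0))"

lemma subspace_spanJ: "subspace (spanJ B)"
  unfolding subspace_def spanJ_def
proof (intro conjI ballI allI)
  show "0 \<in> {s + r |s r. s \<in> span B \<and> r \<in> jacobson_radical}"
    by (intro CollectI exI[of _ 0] exI[of _ 0]) (simp add: span_zero J_zero)
next
  fix x y assume "x \<in> {s + r |s r. s \<in> span B \<and> r \<in> jacobson_radical}"
    "y \<in> {s + r |s r. s \<in> span B \<and> r \<in> jacobson_radical}"
  then obtain s1 r1 s2 r2 where "x = s1 + r1" "y = s2 + r2" "s1 \<in> span B" "s2 \<in> span B"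
    "r1 \<in> (jacobson_radical::'a set)" "r2 \<in> (jacobson_radical::'a set)" by blast
  then show "x + y \<in> {s + r |s r. s \<in> span B \<and> r \<in> jacobson_radical}"
    by (intro CollectI exI[of _ "s1 + s2"] exI[of _ "r1 + r2"]) (auto intro: span_add J_add)
next
  fix c x assume "x \<in> {s + r |s r. s \<in> span B \<and> r \<in> jacobson_radical}"
  then obtain s1 r1 where "x = s1 + r1" "s1 \<in> span B" "r1 \<in> (jacobson_radical::'a set)" by blast
  then show "c *\<^sub>R x \<in> {s + r |s r. s \<in> span B \<and> r \<in> jacobson_radical}"
    by (intro CollectI exI[of _ "c *\<^sub>R s1"] exI[of _ "c *\<^sub>R r1"])
       (auto intro: span_scale J_scaleR simp: scaleR_right_distrib)
qed

lemma span_sub_spanJ: "span B \<subseteq> spanJ B"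
  unfolding spanJ_def using J_zero by force

lemma J_sub_spanJ: "jacobson_radical \<subseteq> spanJ B"
  unfolding spanJ_def using span_zero by force

lemma spanJ_mono: "B \<subseteq> C \<Longrightarrow> spanJ B \<subseteq> spanJ C"
  unfolding spanJ_def using span_mono by blast

lemma spanJ_UNIV: "span G = UNIV \<Longrightarrow> G \<subseteq> spanJ B \<Longrightarrow> spanJ B = UNIV"
  using span_minimal[OF _ subspace_spanJ] by blast

lemma greedy:
  assumes "finite G"
  shows "\<exists>B\<subseteq>G. indepJ B \<and> G \<subseteq> spanJ B"
  using assms
proof (induction G rule: finite_induct)
  case empty then show ?case by (auto simp: indepJ_def)
next
  case (insert g G)
  then obtain B where B: "B \<subseteq> G" "indepJ B" "G \<subseteq> spanJ B" by blast
  show ?case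
  proof (cases "g \<in> spanJ B")
    case True then show ?thesis using B by blast
  next
    case False
    have gB: "g \<notin> B" using False span_sub_spanJ span_base by blast
    have fin: "finite B" using B(1) insert(1) finite_subset by blast
    have "indepJ (insert g B)"
      unfolding indepJ_def
    proof (intro allI impI)
      fix u assume u: "(\<Sum>b\<in>insert g B. u b *\<^sub>R b) \<in> jacobson_radical"
      have eq: "(\<Sum>b\<in>insert g B. u b *\<^sub>R b) = u g *\<^sub>R g + (\<Sum>b\<in>B. u b *\<^sub>R b)"
        using fin gB by simp
      have ug: "u g = 0"
      proof (rule ccontr)
        assume ne: "u g \<noteq> 0"
        let ?r = "(\<Sum>b\<in>insert g B. u b *\<^sub>R b)"
        have "g = (- inverse (u g)) *\<^sub>R (\<Sum>b\<in>B. u b *\<^sub>R b) + inverse (u g) *\<^sub>R ?r"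
          using ne unfolding eq by (simp add: scaleR_right_distrib)
        moreover have "(- inverse (u g)) *\<^sub>R (\<Sum>b\<in>B. u b *\<^sub>R b) \<in> span B"
          by (intro span_scale span_sum) (auto intro: span_base)
        moreover have "inverse (u g) *\<^sub>R ?r \<in> jacobson_radical" using J_scaleR[OF u] .
        ultimately have "g \<in> spanJ B" unfolding spanJ_def by blast
        then show False using False by simp
      qed
      then have "(\<Sum>b\<in>B. u b *\<^sub>R b) \<in> jacobson_radical" using u eq by simp
      then have "\<forall>b\<in>B. u b = 0" using B(2) unfolding indepJ_def by blast
      then show "\<forall>b\<in>insert g B. u b = 0" using ug by simp
    qed
    moreover have "insert g G \<subseteq> spanJ (insert g B)"
      using B(3) spanJ_mono[of B "insert g B"] span_sub_spanJ[of "insert g B"] span_base[of g "insert g B"]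
      by blast
    ultimately show ?thesis using B(1) by blast
  qed
qed

lemma indepJ_insert: "finite B \<Longrightarrow> x \<notin> B \<Longrightarrow> indepJ (insert x B) \<Longrightarrow> indepJ B"
  unfolding indepJ_def
proof (intro allI impI)
  fix u assume fin: "finite B" and x: "x \<notin> B" and
    ind: "\<forall>u. (\<Sum>b\<in>insert x B. u b *\<^sub>R b) \<in> jacobson_radical \<longrightarrow> (\<forall>b\<in>insert x B. u b = 0)"
    and u: "(\<Sum>b\<in>B. u b *\<^sub>R b) \<in> jacobson_radical"
  define u' where "u' = u(x := 0)"
  have "(\<Sum>b\<in>insert x B. u' b *\<^sub>R b) = u' x *\<^sub>R x + (\<Sum>b\<in>B. u' b *\<^sub>R b)"
    using fin x by (rule sum.insert)
  also have "(\<Sum>b\<in>B. u' b *\<^sub>R b) = (\<Sum>b\<in>B. u b *\<^sub>R b)"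
    using x by (intro sum.cong) (auto simp: u'_def)
  finally have "(\<Sum>b\<in>insert x B. u' b *\<^sub>R b) = (\<Sum>b\<in>B. u b *\<^sub>R b)" by (simp add: u'_def)
  then have "\<forall>b\<in>insert x B. u' b = 0" using ind u by simp
  then show "\<forall>b\<in>B. u b = 0"
  proof (intro ballI)
    fix b assume b: "b \<in> B"
    assume "\<forall>b\<in>insert x B. u' b = 0"
    then have "u' b = 0" using b by blast
    moreover have "b \<noteq> x" using b x by auto
    ultimately show "u b = 0" by (simp add: u'_def)
  qed
qed

lemma sum_delta_mult: "finite B \<Longrightarrow> b' \<in> B \<Longrightarrow> (\<Sum>b\<in>B. f b * (if b = b' then 1 else 0)) = (f b' :: real)"
  by (simp add: if_distrib sum.delta' cong: if_cong)

lemma dual_exists: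
  assumes "finite B" "indepJ B"
  shows "\<exists>a. \<forall>b\<in>B. \<forall>b'\<in>B. tf (a b) b' = (if b = b' then 1 else 0)"
  using assms
proof (induction B rule: finite_induct)
  case empty then show ?case by auto
next
  case (insert x B)
  have indB: "indepJ B" using indepJ_insert insert by blast
  obtain a where a: "\<forall>b\<in>B. \<forall>b'\<in>B. tf (a b) b' = (if b = b' then 1 else 0)"
    using insert.IH[OF indB] by blast
  define g where "g y = tf y x - (\<Sum>b\<in>B. tf (a b) x * tf y b)" for y
  have lin_g: "g (c *\<^sub>R y) = c * g y" for c y
    unfolding g_def by (simp add: tf_scale_left sum_distrib_left right_diff_distrib mult.left_commute)
  have "\<exists>w. g w \<noteq> 0"
  proof (rule ccontr)
    assume "\<nexists>w. g w \<noteq> 0"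
    then have g0: "g y = 0" for y by blast
    define v where "v = x - (\<Sum>b\<in>B. tf (a b) x *\<^sub>R b)"
    have "tf y v = 0" for y
      using g0[of y] unfolding v_def g_def by (simp add: tf_diff_right tf_sum_right tf_scale_right)
    then have vJ: "v \<in> jacobson_radical" using J_tf' by blast
    define u where "u b = (if b = x then 1 else - tf (a b) x)" for b
    have "(\<Sum>b\<in>insert x B. u b *\<^sub>R b) = x + (\<Sum>b\<in>B. u b *\<^sub>R b)" using insert(1,2) by (simp add: u_def)
    also have "(\<Sum>b\<in>B. u b *\<^sub>R b) = (\<Sum>b\<in>B. (- tf (a b) x) *\<^sub>R b)"
      using insert(2) by (intro sum.cong) (auto simp: u_def)
    finally have "(\<Sum>b\<in>insert x B. u b *\<^sub>R b) = v" unfolding v_def by (simp add: sum_negf)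
    then have "u x = 0" using insert.prems vJ unfolding indepJ_def by blast
    then show False by (simp add: u_def)
  qed
  then obtain w where w: "g w \<noteq> 0" by blast
  define w' where "w' = inverse (g w) *\<^sub>R w"
  have gw': "g w' = 1" unfolding w'_def using lin_g w by simp
  define ax where "ax = w' - (\<Sum>b\<in>B. tf w' b *\<^sub>R a b)"
  have axB: "tf ax b' = 0" if "b' \<in> B" for b'
  proof -
    have "tf ax b' = tf w' b' - (\<Sum>b\<in>B. tf w' b * tf (a b) b')"
      unfolding ax_def by (simp add: tf_diff_left tf_sum_left tf_scale_left)
    also have "(\<Sum>b\<in>B. tf w' b * tf (a b) b') = (\<Sum>b\<in>B. tf w' b * (if b = b' then 1 else 0))"
      using a that by (intro sum.cong) auto
    also have "\<dots> = tf w' b'" using sum_delta_mult[OF insert(1) that] .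
    finally show ?thesis by simp
  qed
  have axx: "tf ax x = 1"
  proof -
    have "tf ax x = tf w' x - (\<Sum>b\<in>B. tf w' b * tf (a b) x)"
      unfolding ax_def by (simp add: tf_diff_left tf_sum_left tf_scale_left)
    also have "\<dots> = g w'" unfolding g_def by (simp add: mult.commute)
    finally show ?thesis using gw' by simp
  qed
  define a' where "a' b = (if b = x then ax else a b - tf (a b) x *\<^sub>R ax)" for b
  have "\<forall>b\<in>insert x B. \<forall>b'\<in>insert x B. tf (a' b) b' = (if b = b' then 1 else 0)"
  proof (intro ballI)
    fix b b' assume b: "b \<in> insert x B" and b': "b' \<in> insert x B"
    show "tf (a' b) b' = (if b = b' then 1 else 0)"
    proof (cases "b = x")
      case True
      then show ?thesis using axx axB b' insert(2) by (auto simp: a'_def)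
    next
      case False
      then have bB: "b \<in> B" using b by auto
      show ?thesis
      proof (cases "b' = x")
        case True
        then show ?thesis using False axx by (simp add: a'_def tf_diff_left tf_scale_left)
      next
        case False2: False
        then have "b' \<in> B" using b' by auto
        then show ?thesis using False a bB axB by (simp add: a'_def tf_diff_left tf_scale_left)
      qed
    qed
  qed
  then show ?case by blast
qed

definition dp :: "'a set \<Rightarrow> ('a \<Rightarrow> 'a) \<Rightarrow> bool" where
  "dp B a \<longleftrightarrow> finite B \<and> (\<forall>b\<in>B. \<forall>b'\<in>B. tf (a b) b' = (if b = b' then 1 else 0)) \<and> spanJ B = UNIV"

lemma dp_exists_in:
  assumes "finite G" "span G = UNIV"
  shows "\<exists>B a. B \<subseteq> G \<and> dp B a"
proof -
  obtain B where B: "B \<subseteq> G" "indepJ B" "G \<subseteq> spanJ B" using greedy[OF assms(1)] by blast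
  have fin: "finite B" using B(1) assms(1) finite_subset by blast
  obtain a where "\<forall>b\<in>B. \<forall>b'\<in>B. tf (a b) b' = (if b = b' then 1 else 0)" using dual_exists[OF fin B(2)] by blast
  moreover have "spanJ B = UNIV" using spanJ_UNIV[OF assms(2) B(3)] .
  ultimately show ?thesis using B(1) fin unfolding dp_def by blast
qed

lemma tf_vanish_spanJ:
  assumes "\<And>b. b \<in> B \<Longrightarrow> tf v b = 0" "x \<in> spanJ B"
  shows "tf v x = 0"
proof -
  obtain s r where sr: "x = s + r" "s \<in> span B" "r \<in> jacobson_radical" using assms(2) unfolding spanJ_def by blast
  have "tf v s = 0" using sr(2)
  proof (induction rule: span_induct_alt)
    case base then show ?case by (simp add: tf_def ltrace_zero)
  next
    case (step c x y) then show ?case using assms(1) by (simp add: tf_add_right tf_scale_right)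
  qed
  then show ?thesis using sr tf_J_right by (simp add: tf_add_right)
qed

lemma dp_E2:
  assumes "dp B a"
  shows "y - (\<Sum>b\<in>B. tf y b *\<^sub>R a b) \<in> jacobson_radical"
proof (rule J_tf)
  fix x
  have fin: "finite B" and d: "\<forall>b\<in>B. \<forall>b'\<in>B. tf (a b) b' = (if b = b' then 1 else 0)"
    and sp: "spanJ B = UNIV" using assms unfolding dp_def by auto
  have "tf (y - (\<Sum>b\<in>B. tf y b *\<^sub>R a b)) b' = 0" if b': "b' \<in> B" for b'
  proof -
    have "tf (y - (\<Sum>b\<in>B. tf y b *\<^sub>R a b)) b' = tf y b' - (\<Sum>b\<in>B. tf y b * tf (a b) b')"
      by (simp add: tf_diff_left tf_sum_left tf_scale_left)
    also have "(\<Sum>b\<in>B. tf y b * tf (a b) b') = (\<Sum>b\<in>B. tf y b * (if b = b' then 1 else 0))"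
      using d b' by (intro sum.cong) auto
    also have "\<dots> = tf y b'" using sum_delta_mult[OF fin b'] .
    finally show ?thesis by simp
  qed
  then show "tf (y - (\<Sum>b\<in>B. tf y b *\<^sub>R a b)) x = 0"
    using tf_vanish_spanJ sp by blast
qed

lemma dp_E1:
  assumes "dp B a"
  shows "z - (\<Sum>b\<in>B. tf (a b) z *\<^sub>R b) \<in> jacobson_radical"
proof (rule J_tf')
  fix x
  have fin: "finite B" and d: "\<forall>b\<in>B. \<forall>b'\<in>B. tf (a b) b' = (if b = b' then 1 else 0)"
    using assms unfolding dp_def by auto
  define v where "v = z - (\<Sum>b\<in>B. tf (a b) z *\<^sub>R b)"
  have ab: "tf (a b') v = 0" if b': "b' \<in> B" for b'
  proof -
    have "tf (a b') v = tf (a b') z - (\<Sum>b\<in>B. tf (a b) z * tf (a b') b)"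
      unfolding v_def by (simp add: tf_diff_right tf_sum_right tf_scale_right mult.commute)
    also have "(\<Sum>b\<in>B. tf (a b) z * tf (a b') b) = (\<Sum>b\<in>B. tf (a b) z * (if b = b' then 1 else 0))"
      using d b' by (intro sum.cong) auto
    also have "\<dots> = tf (a b') z" using sum_delta_mult[OF fin b'] .
    finally show ?thesis by simp
  qed
  have "tf x v = tf (x - (\<Sum>b\<in>B. tf x b *\<^sub>R a b)) v + (\<Sum>b\<in>B. tf x b * tf (a b) v)"
    by (simp add: tf_diff_left tf_sum_left tf_scale_left)
  also have "\<dots> = 0" using tf_J_left[OF dp_E2[OF assms, of x]] ab by simp
  finally show "tf x v = 0" .
qed

lemma bilinear_expand_left:
  fixes \<Phi> :: "'a \<Rightarrow> 'a \<Rightarrow> 'c::real_vector"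
  assumes "dp B a" and lin: "\<And>q. linear (\<lambda>p. \<Phi> p q)"
    and van: "\<And>p q. p \<in> jacobson_radical \<Longrightarrow> \<Phi> p q = 0"
  shows "\<Phi> p q = (\<Sum>b\<in>B. tf p b *\<^sub>R \<Phi> (a b) q)"
proof -
  have "\<Phi> p q = \<Phi> (p - (\<Sum>b\<in>B. tf p b *\<^sub>R a b)) q + \<Phi> (\<Sum>b\<in>B. tf p b *\<^sub>R a b) q"
    using linear_add[OF lin[of q]] by (metis diff_add_cancel)
  also have "\<Phi> (p - (\<Sum>b\<in>B. tf p b *\<^sub>R a b)) q = 0" using van[OF dp_E2[OF assms(1)]] .
  also have "\<Phi> (\<Sum>b\<in>B. tf p b *\<^sub>R a b) q = (\<Sum>b\<in>B. \<Phi> (tf p b *\<^sub>R a b) q)"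
    using linear_sum[OF lin[of q], of "\<lambda>b. tf p b *\<^sub>R a b" B] by simp
  also have "\<dots> = (\<Sum>b\<in>B. tf p b *\<^sub>R \<Phi> (a b) q)"
    using linear_scale[OF lin[of q]] by simp
  finally show ?thesis by simp
qed

lemma bilinear_expand_right:
  fixes \<Phi> :: "'a \<Rightarrow> 'a \<Rightarrow> 'c::real_vector"
  assumes "dp B a" and lin: "\<And>p. linear (\<lambda>q. \<Phi> p q)"
    and van: "\<And>p q. q \<in> jacobson_radical \<Longrightarrow> \<Phi> p q = 0"
  shows "\<Phi> p q = (\<Sum>b\<in>B. tf (a b) q *\<^sub>R \<Phi> p b)"
proof -
  have "\<Phi> p q = \<Phi> p (q - (\<Sum>b\<in>B. tf (a b) q *\<^sub>R b)) + \<Phi> p (\<Sum>b\<in>B. tf (a b) q *\<^sub>R b)"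
    using linear_add[OF lin[of p]] by (metis diff_add_cancel)
  also have "\<Phi> p (q - (\<Sum>b\<in>B. tf (a b) q *\<^sub>R b)) = 0" using van[OF dp_E1[OF assms(1)]] .
  also have "\<Phi> p (\<Sum>b\<in>B. tf (a b) q *\<^sub>R b) = (\<Sum>b\<in>B. \<Phi> p (tf (a b) q *\<^sub>R b))"
    using linear_sum[OF lin[of p], of "\<lambda>b. tf (a b) q *\<^sub>R b" B] by simp
  also have "\<dots> = (\<Sum>b\<in>B. tf (a b) q *\<^sub>R \<Phi> p b)"
    using linear_scale[OF lin[of p]] by simp
  finally show ?thesis by simp
qed

lemma invariance:
  fixes \<Phi> :: "'a \<Rightarrow> 'a \<Rightarrow> 'c::real_vector"
  assumes dpB: "dp B a" and lin1: "\<And>q. linear (\<lambda>p. \<Phi> p q)" and lin2: "\<And>p. linear (\<lambda>q. \<Phi> p q)"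
    and van1: "\<And>p q. p \<in> jacobson_radical \<Longrightarrow> \<Phi> p q = 0"
    and van2: "\<And>p q. q \<in> jacobson_radical \<Longrightarrow> \<Phi> p q = 0"
  shows "(\<Sum>b\<in>B. \<Phi> (x * a b) b) = (\<Sum>b\<in>B. \<Phi> (a b) (b * x))"
proof -
  have "(\<Sum>b\<in>B. \<Phi> (x * a b) b) = (\<Sum>b\<in>B. \<Sum>b'\<in>B. tf (x * a b) b' *\<^sub>R \<Phi> (a b') b)"
    by (intro sum.cong refl bilinear_expand_left[of B a \<Phi>, OF dpB lin1 van1])
  also have "\<dots> = (\<Sum>b\<in>B. \<Sum>b'\<in>B. tf (a b') (b * x) *\<^sub>R \<Phi> (a b) b')"
  proof -
    have "tf (x * a b) b' = tf (a b) (b' * x)" for b b'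
      unfolding tf_def using ltrace_comm[OF fd, of x "a b * b'"] by (simp add: mult.assoc)
    then have e1: "(\<Sum>b\<in>B. \<Sum>b'\<in>B. tf (x * a b) b' *\<^sub>R \<Phi> (a b') b) = (\<Sum>b'\<in>B. \<Sum>b\<in>B. tf (a b') (b * x) *\<^sub>R \<Phi> (a b) b')"
      by simp
    have e2: "(\<Sum>b'\<in>B. \<Sum>b\<in>B. tf (a b') (b * x) *\<^sub>R \<Phi> (a b) b') = (\<Sum>b\<in>B. \<Sum>b'\<in>B. tf (a b') (b * x) *\<^sub>R \<Phi> (a b) b')"
      by (rule sum.swap)
    show ?thesis using e1 e2 by simp
  qed
  also have "\<dots> = (\<Sum>b\<in>B. \<Phi> (a b) (b * x))"
    by (intro sum.cong refl bilinear_expand_right[of B a \<Phi>, OF dpB lin2 van2, symmetric])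
  finally show ?thesis .
qed

lemma sigma_indep:
  assumes dpB: "dp B a" and dpC: "dp C a'"
  shows "(\<Sum>b\<in>B. tf (a b) (b * y)) = (\<Sum>b\<in>C. tf (a' b) (b * y))"
proof -
  define \<Phi> where "\<Phi> p q = tf p (q * y)" for p q
  have lin1: "linear (\<lambda>p. \<Phi> p q)" for q unfolding \<Phi>_def by (rule linear_tf_left)
  have lin2: "linear (\<lambda>q. \<Phi> p q)" for p unfolding \<Phi>_def
    using linear_compose[OF linear_rmult linear_tf_right] by (simp add: o_def)
  have van1: "\<Phi> p q = 0" if "p \<in> jacobson_radical" for p q unfolding \<Phi>_def using tf_J_left[OF that] .
  have van2: "\<Phi> p q = 0" if "q \<in> jacobson_radical" for p q unfolding \<Phi>_def
    using tf_J_right[OF J_right_mult[OF fd that]] .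
  have "(\<Sum>b\<in>B. \<Phi> (a b) b) = (\<Sum>b\<in>B. \<Sum>c\<in>C. tf (a b) c *\<^sub>R \<Phi> (a' c) b)"
    by (intro sum.cong refl bilinear_expand_left[of C a' \<Phi>, OF dpC lin1 van1])
  also have "\<dots> = (\<Sum>c\<in>C. \<Sum>b\<in>B. tf (a b) c *\<^sub>R \<Phi> (a' c) b)" by (rule sum.swap)
  also have "\<dots> = (\<Sum>c\<in>C. \<Phi> (a' c) c)"
    by (intro sum.cong refl bilinear_expand_right[of B a \<Phi>, OF dpB lin2 van2, symmetric])
  finally show ?thesis unfolding \<Phi>_def .
qed

end


lemma c_invertible:
  fixes a :: "'a::real_algebra_1 \<Rightarrow> 'a"
  assumes fd: "finite_dim_space TYPE('a)" and dpB: "dp B a"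
  shows "\<exists>d. (\<Sum>b\<in>B. a b * b) * d - 1 \<in> jacobson_radical \<and> d * (\<Sum>b\<in>B. a b * b) - 1 \<in> jacobson_radical"
proof -
  define c where "c = (\<Sum>b\<in>B. a b * b)"
  define N where "N = {w. w * c \<in> (jacobson_radical :: 'a set)}"
  have LN: "left_ideal N"
    unfolding left_ideal_def N_def
    by (auto simp: J_zero distrib_right J_add mult.assoc intro: J_mult)
  have finB: "finite B" using dpB unfolding dp_def[OF fd] by auto
  have NJ: "N \<subseteq> jacobson_radical"
  proof (rule nil_mod_J_left_ideal[OF LN])
    fix v assume v: "v \<in> N"
    show "\<exists>k. v ^ k \<in> jacobson_radical"
    proof (rule ccontr)
      assume nk: "\<not> (\<exists>k. v ^ k \<in> jacobson_radical)"
      obtain n E where E: "n \<ge> 1" "E * E = E" "v ^ n * E = v ^ n" "\<exists>q\<in>pows v. E = q * v ^ n"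
        using idempotent_from_power[OF fd, of v] by blast
      obtain q where q: "E = q * v ^ n" using E(4) by blast
      have EN: "E * c \<in> jacobson_radical"
      proof -
        have "v ^ n = v ^ (n - 1) * v" using E(1) by (metis Suc_diff_1 less_le_trans zero_less_one power_Suc2)
        then have "E * c = (q * v ^ (n - 1)) * (v * c)" using q by (simp add: mult.assoc)
        then show ?thesis using v J_mult unfolding N_def by auto
      qed
      have EJ: "E \<notin> jacobson_radical"
      proof
        assume "E \<in> jacobson_radical"
        then have "v ^ n * E \<in> jacobson_radical" by (rule J_mult)
        then show False using E(3) nk by auto
      qed
      obtain S :: "'a set" where S: "finite S" "span S = UNIV" using fds_obtain[OF fd] by blast
      define G where "G = (\<lambda>s. s * E) ` S \<union> (\<lambda>s. s * (1 - E)) ` S"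
      have "S \<subseteq> span G"
      proof
        fix s assume "s \<in> S"
        then have "s * E \<in> span G" "s * (1 - E) \<in> span G" unfolding G_def by (auto intro: span_base)
        then have "s * E + s * (1 - E) \<in> span G" by (rule span_add)
        then show "s \<in> span G" by (simp add: right_diff_distrib)
      qed
      then have spG: "span G = UNIV" using S(2) by (metis span_minimal subspace_span top.extremum_uniqueI)
      have finG: "finite G" unfolding G_def using S(1) by simp
      obtain B' a' where B': "B' \<subseteq> G" "dp B' a'" using dp_exists_in[OF fd finG spG] by blast
      have finB': "finite B'" using B'(2) unfolding dp_def[OF fd] by auto
      have bE: "b * E = b \<or> b * E = 0" if "b \<in> B'" for b
      proof -
        have "b \<in> G" using that B'(1) by auto
        then show ?thesis unfolding G_def
          by (auto simp: mult.assoc E(2) left_diff_distrib)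
      qed
      have trm: "tf (a' b) (b * E) = (if b * E = b then 1 else 0)" if b: "b \<in> B'" for b
        using bE[OF b] B'(2) b unfolding dp_def[OF fd] by (auto simp: tf_def ltrace_zero)
      obtain b0 where b0: "b0 \<in> B'" "b0 * E = b0"
      proof (rule ccontr)
        assume "\<not> thesis"
        then have all0: "\<forall>b\<in>B'. b * E = 0" using that bE by blast
        have "E \<in> spanJ B'" using B'(2) unfolding dp_def[OF fd] by auto
        then obtain s r where sr: "E = s + r" "s \<in> span B'" "r \<in> jacobson_radical" unfolding spanJ_def[OF fd] by blast
        have "s * E = 0" using sr(2)
        proof (induction rule: span_induct_alt)
          case (step c x y) then show ?case using all0 by (simp add: distrib_right)
        qed simp
        then have "E = r * E" using sr(1) E(2) by (metis add_0 distrib_right)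
        then have "E \<in> jacobson_radical" using J_right_mult[OF fd sr(3)] by metis
        then show False using EJ by simp
      qed
      have "(\<Sum>b\<in>B'. tf (a' b) (b * E)) = (\<Sum>b\<in>B'. (if b * E = b then 1 else 0))"
        using trm by simp
      moreover have "(1::real) \<le> (\<Sum>b\<in>B'. (if b * E = b then 1 else 0))"
        using member_le_sum[of b0 B' "\<lambda>b. if b * E = b then 1 else (0::real)"] b0 finB' by auto
      moreover have "(\<Sum>b\<in>B'. tf (a' b) (b * E)) = (\<Sum>b\<in>B. tf (a b) (b * E))"
        using sigma_indep[OF fd B'(2) dpB] .
      moreover have "(\<Sum>b\<in>B. tf (a b) (b * E)) = ltrace (c * E)"
        unfolding c_def tf_def by (simp add: ltrace_sum[OF fd] sum_distrib_right mult.assoc)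
      moreover have "ltrace (c * E) = 0"
        using ltrace_comm[OF fd, of c E] J_ltrace[OF fd EN] by simp
      ultimately show False by simp
    qed
  qed
  obtain n q where q: "q \<in> pows c" "c ^ n = c ^ Suc n * q" using power_relation[OF fd] by blast
  define x where "x = 1 - c * q"
  have "x * c ^ n = 0"
  proof -
    have "c * q * c ^ n = c * (c ^ n * q)"
      using pows_commute[OF q(1) pow_in_pows[of c n]] by (simp add: mult.assoc)
    also have "\<dots> = c ^ Suc n * q" by (simp add: mult.assoc)
    also have "\<dots> = c ^ n" using q(2) by simp
    finally show ?thesis unfolding x_def by (simp add: left_diff_distrib)
  qed
  have "x * c ^ m \<in> jacobson_radical \<Longrightarrow> x \<in> jacobson_radical" for m
  proof (induction m)
    case (Suc m)
    have "(x * c ^ m) * c \<in> jacobson_radical" using Suc.prems by (simp only: mult.assoc power_Suc2)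
    then have "x * c ^ m \<in> N" unfolding N_def by simp
    then show ?case using NJ Suc.IH by auto
  qed simp
  then have xJ: "x \<in> jacobson_radical" using \<open>x * c ^ n = 0\<close> J_zero by metis
  have "c * q - 1 \<in> jacobson_radical" using J_neg[OF xJ] unfolding x_def by simp
  moreover have "q * c - 1 \<in> jacobson_radical"
    using J_neg[OF xJ] pows_commute[OF q(1) self_in_pows] unfolding x_def by simp
  ultimately show ?thesis unfolding c_def by blast
qed


lemma neumann_inverse:
  fixes x :: "'b::{real_normed_algebra_1,banach}"
  assumes "norm (1 - x) < 1"
  shows "\<exists>y. x * y = 1 \<and> y * x = 1"
proof -
  define z where "z = 1 - x"
  have nz: "norm z < 1" using assms z_def by simp
  have sm: "summable (\<lambda>n. z ^ n)" using complete_algebra_summable_geometric[OF nz] by simp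
  define S where "S = suminf (\<lambda>n. z ^ n)"
  have P: "(\<lambda>N. \<Sum>n<N. z ^ n) \<longlonglongrightarrow> S" unfolding S_def using summable_LIMSEQ[OF sm] .
  have zN: "(\<lambda>N. z ^ N) \<longlonglongrightarrow> 0" using LIMSEQ_power_zero[OF nz] by simp
  have x: "x = 1 - z" using z_def by simp
  have "(\<lambda>N. x * (\<Sum>n<N. z ^ n)) \<longlonglongrightarrow> x * S" by (intro tendsto_mult tendsto_const P)
  moreover have "(\<lambda>N. x * (\<Sum>n<N. z ^ n)) = (\<lambda>N. 1 - z ^ N)" unfolding x using geom_telescope(2) by auto
  moreover have "(\<lambda>N. 1 - z ^ N) \<longlonglongrightarrow> 1 - 0" by (intro tendsto_diff tendsto_const zN)
  ultimately have 1: "x * S = 1" using LIMSEQ_unique by fastforce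
  have "(\<lambda>N. (\<Sum>n<N. z ^ n) * x) \<longlonglongrightarrow> S * x" by (intro tendsto_mult tendsto_const P)
  moreover have "(\<lambda>N. (\<Sum>n<N. z ^ n) * x) = (\<lambda>N. 1 - z ^ N)" unfolding x using geom_telescope(1) by auto
  moreover have "(\<lambda>N. 1 - z ^ N) \<longlonglongrightarrow> 1 - 0" by (intro tendsto_diff tendsto_const zN)
  ultimately have 2: "S * x = 1" using LIMSEQ_unique by fastforce
  show ?thesis using 1 2 by blast
qed

lemma closedin_sequentially_sub:
  fixes T :: "'x::metric_space set"
  assumes "T \<subseteq> S" and seq: "\<And>\<sigma> l. (\<forall>n. \<sigma> n \<in> T) \<Longrightarrow> \<sigma> \<longlonglongrightarrow> l \<Longrightarrow> l \<in> S \<Longrightarrow> l \<in> T"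
  shows "closedin (top_of_set S) T"
proof -
  have "T = S \<inter> closure T"
  proof
    show "T \<subseteq> S \<inter> closure T" using assms(1) closure_subset by blast
    show "S \<inter> closure T \<subseteq> T"
    proof
      fix l assume "l \<in> S \<inter> closure T"
      then obtain \<sigma> where "\<forall>n. \<sigma> n \<in> T" "\<sigma> \<longlonglongrightarrow> l" "l \<in> S" using closure_sequential by blast
      then show "l \<in> T" using seq by blast
    qed
  qed
  then show ?thesis using closedin_closed by blast
qed

lemma closedin_seq_limit:
  fixes T :: "'x::metric_space set"
  assumes "closedin (top_of_set S) T" "\<forall>n. \<sigma> n \<in> T" "\<sigma> \<longlonglongrightarrow> l" "l \<in> S"
  shows "l \<in> T"
proof -
  obtain C where C: "closed C" "T = S \<inter> C" using assms(1) closedin_closed by blast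
  have "l \<in> C" using closed_sequentially[OF C(1)] assms(2,3) C(2) by blast
  then show ?thesis using C(2) assms(4) by blast
qed

lemma BAlgD:
  assumes "\<psi> \<in> BAlg"
  shows "blinfun_apply \<psi> (x * y) = blinfun_apply \<psi> x * blinfun_apply \<psi> y" "blinfun_apply \<psi> 1 = 1"
  using assms unfolding BAlg_def by auto

lemma orbit_sub_BAlg:
  assumes "\<phi> \<in> BAlg"
  shows "conj_orbit \<phi> \<subseteq> BAlg"
proof
  fix \<psi> assume "\<psi> \<in> conj_orbit \<phi>"
  then obtain u v where uv: "u * v = 1" "v * u = 1" "\<And>x. blinfun_apply \<psi> x = u * blinfun_apply \<phi> x * v"
    unfolding conj_orbit_def by blast
  have "blinfun_apply \<psi> (x * y) = blinfun_apply \<psi> x * blinfun_apply \<psi> y" for x y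
  proof -
    have "blinfun_apply \<psi> x * blinfun_apply \<psi> y = u * blinfun_apply \<phi> x * (v * u) * blinfun_apply \<phi> y * v"
      using uv(3) by (simp add: mult.assoc)
    also have "\<dots> = u * blinfun_apply \<phi> (x * y) * v" using uv(2) BAlgD(1)[OF assms] by (simp add: mult.assoc)
    finally show ?thesis using uv(3) by simp
  qed
  moreover have "blinfun_apply \<psi> 1 = 1" using uv BAlgD(2)[OF assms] by simp
  ultimately show "\<psi> \<in> BAlg" unfolding BAlg_def by blast
qed

lemma part1:
  fixes \<phi> :: "'a::{real_normed_algebra_1,banach} \<Rightarrow>\<^sub>L 'b::{real_normed_algebra_1,banach}"
  assumes fd: "finite_dim_space TYPE('a)" and phi: "\<phi> \<in> BAlg"
    and kill: "blinfun_apply \<phi> ` jacobson_radical \<subseteq> {0}"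
  shows "closedin (top_of_set BAlg) (conj_orbit \<phi>)"
proof (rule closedin_sequentially_sub[OF orbit_sub_BAlg[OF phi]])
  fix \<sigma> \<psi> assume \<sigma>: "\<forall>n. \<sigma> n \<in> conj_orbit \<phi>" and lim: "\<sigma> \<longlonglongrightarrow> \<psi>" and psi: "\<psi> \<in> BAlg"
  have "\<forall>n. \<exists>u v. u * v = 1 \<and> v * u = 1 \<and> (\<forall>x. blinfun_apply (\<sigma> n) x = u * blinfun_apply \<phi> x * v)"
    using \<sigma> unfolding conj_orbit_def by blast
  then obtain U V where UV: "\<And>n. U n * V n = 1" "\<And>n. V n * U n = 1"
    "\<And>n x. blinfun_apply (\<sigma> n) x = U n * blinfun_apply \<phi> x * V n"
    by metis
  have pt: "(\<lambda>n. blinfun_apply (\<sigma> n) x) \<longlonglongrightarrow> blinfun_apply \<psi> x" for x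
    by (intro blinfun.tendsto lim tendsto_const)
  have phiJ: "blinfun_apply \<phi> r = 0" if "r \<in> jacobson_radical" for r using kill that by auto
  have psiJ: "blinfun_apply \<psi> r = 0" if r: "r \<in> jacobson_radical" for r
  proof -
    have "(\<lambda>n. blinfun_apply (\<sigma> n) r) = (\<lambda>n. 0)" using UV(3) phiJ[OF r] by simp
    then show ?thesis using pt[of r] LIMSEQ_unique tendsto_const by metis
  qed
  obtain S :: "'a set" where S: "finite S" "span S = UNIV" using fds_obtain[OF fd] by blast
  obtain B :: "'a set" and a :: "'a \<Rightarrow> 'a" where dpB: "dp B a" using dp_exists_in[OF fd S] by blast
  have finB: "finite B" using dpB unfolding dp_def[OF fd] by auto
  define c where "c = (\<Sum>b\<in>B. a b * b)"
  obtain d where d: "c * d - 1 \<in> jacobson_radical" "d * c - 1 \<in> jacobson_radical"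
    using c_invertible[OF fd dpB] unfolding c_def by blast
  let ?p = "blinfun_apply \<psi>" and ?f = "blinfun_apply \<phi>"
  have linp: "linear ?p" "linear ?f" by (simp_all add: bounded_linear.linear blinfun.bounded_linear_right)
  have "?p (c * d - 1) = 0" "?p (d * c - 1) = 0" using psiJ d by auto
  then have cd: "?p c * ?p d = 1" "?p d * ?p c = 1"
    using BAlgD[OF psi] linear_diff[OF linp(1)] by auto
  define e where "e n = (\<Sum>b\<in>B. ?p (a b) * blinfun_apply (\<sigma> n) b)" for n
  have "e \<longlonglongrightarrow> (\<Sum>b\<in>B. ?p (a b) * ?p b)"
    unfolding e_def by (intro tendsto_sum tendsto_mult tendsto_const pt)
  moreover have "(\<Sum>b\<in>B. ?p (a b) * ?p b) = ?p c"
    unfolding c_def using BAlgD(1)[OF psi] linear_sum[OF linp(1), of "\<lambda>b. a b * b" B] by simp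
  ultimately have elim: "e \<longlonglongrightarrow> ?p c" by simp
  have l1: "(\<lambda>n. ?p d * e n) \<longlonglongrightarrow> 1" using tendsto_mult[OF tendsto_const elim, of "?p d"] cd by simp
  have l2: "(\<lambda>n. e n * ?p d) \<longlonglongrightarrow> 1" using tendsto_mult[OF elim tendsto_const, of "?p d"] cd by simp
  have "eventually (\<lambda>n. dist (?p d * e n) 1 < 1) sequentially"
    using l1 unfolding tendsto_iff by simp
  moreover have "eventually (\<lambda>n. dist (e n * ?p d) 1 < 1) sequentially"
    using l2 unfolding tendsto_iff by simp
  ultimately obtain N where N: "dist (?p d * e N) 1 < 1" "dist (e N * ?p d) 1 < 1"
    using eventually_conj eventually_sequentially by (metis (mono_tags, lifting) order_refl)
  obtain y1 where y1: "y1 * (?p d * e N) = 1"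
    using neumann_inverse[of "?p d * e N"] N(1) by (auto simp: dist_norm norm_minus_commute)
  obtain y2 where y2: "(e N * ?p d) * y2 = 1"
    using neumann_inverse[of "e N * ?p d"] N(2) by (auto simp: dist_norm norm_minus_commute)
  define L where "L = y1 * ?p d"
  define R where "R = ?p d * y2"
  have L: "L * e N = 1" unfolding L_def using y1 by (simp add: mult.assoc)
  have R: "e N * R = 1" unfolding R_def using y2 by (simp add: mult.assoc)
  have LR: "L = R" using L R by (metis mult.assoc mult_1_left mult_1_right)
  define w where "w = e N * U N"
  define w' where "w' = V N * L"
  have ww': "w * w' = 1"
  proof -
    have "w * w' = e N * (U N * V N) * L" unfolding w_def w'_def by (simp add: mult.assoc)
    also have "\<dots> = 1" using UV(1) R LR by simp
    finally show ?thesis .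
  qed
  have w'w: "w' * w = 1"
  proof -
    have "w' * w = V N * (L * e N) * U N" unfolding w_def w'_def by (simp add: mult.assoc)
    also have "\<dots> = 1" using UV(2) L by simp
    finally show ?thesis .
  qed
  have wsum: "w = (\<Sum>b\<in>B. ?p (a b) * U N * ?f b)"
  proof -
    have "blinfun_apply (\<sigma> N) b * U N = U N * ?f b" for b
      using UV(3)[of N b] UV(2)[of N] by (simp add: mult.assoc)
    then show ?thesis unfolding w_def e_def by (simp add: sum_distrib_right mult.assoc)
  qed
  define \<Phi> where "\<Phi> p q = ?p p * U N * ?f q" for p q
  have lin1: "linear (\<lambda>p. \<Phi> p q)" for q
    unfolding \<Phi>_def using linear_compose[OF linp(1) linear_rmult[of "U N * ?f q"]]
    by (simp add: o_def mult.assoc)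
  have lin2: "linear (\<lambda>q. \<Phi> p q)" for p
    unfolding \<Phi>_def using linear_compose[OF linp(2) linear_lmult[of "?p p * U N"]]
    by (simp add: o_def mult.assoc)
  have van1: "\<Phi> p q = 0" if "p \<in> jacobson_radical" for p q unfolding \<Phi>_def using psiJ[OF that] by simp
  have van2: "\<Phi> p q = 0" if "q \<in> jacobson_radical" for p q unfolding \<Phi>_def using phiJ[OF that] by simp
  have inter: "?p x * w = w * ?f x" for x
  proof -
    have "?p x * w = (\<Sum>b\<in>B. \<Phi> (x * a b) b)"
      unfolding wsum \<Phi>_def by (simp add: sum_distrib_left BAlgD(1)[OF psi] mult.assoc)
    also have "\<dots> = (\<Sum>b\<in>B. \<Phi> (a b) (b * x))"
      using invariance[OF fd dpB lin1 lin2 van1 van2] .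
    also have "\<dots> = w * ?f x"
      unfolding wsum \<Phi>_def by (simp add: sum_distrib_right BAlgD(1)[OF phi] mult.assoc)
    finally show ?thesis .
  qed
  have "?p x = w * ?f x * w'" for x
  proof -
    have "?p x = ?p x * (w * w')" using ww' by simp
    also have "\<dots> = w * ?f x * w'" using inter[of x] by (simp add: mult.assoc[symmetric])
    finally show ?thesis .
  qed
  then show "\<psi> \<in> conj_orbit \<phi>" unfolding conj_orbit_def using ww' w'w by blast
qed


context ring
begin

lemma finsum_delta':
  assumes "finite A" "l0 \<in> A" "c \<in> carrier R"
  shows "(\<Oplus>l\<in>A. if l = l0 then c else \<zero>) = c"
proof -
  have "(\<Oplus>l\<in>A. if l = l0 then c else \<zero>) = (\<Oplus>l\<in>A. if l0 = l then (\<lambda>_. c) l else \<zero>)"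
    by (intro finsum_cong') (auto simp: assms)
  also have "\<dots> = c" using finsum_singleton[of l0 A "\<lambda>_. c"] assms by auto
  finally show ?thesis .
qed

lemma finsum_zero'':
  assumes "finite A" shows "(\<Oplus>l\<in>A. \<zero>) = \<zero>"
  using finsum_zero[of A] assms by simp

lemma my_finsum_cong:
  "A = B \<Longrightarrow> g \<in> B \<rightarrow> carrier R \<Longrightarrow> (\<And>i. i \<in> B \<Longrightarrow> f i = g i) \<Longrightarrow> finsum R f A = finsum R g B"
  by (rule finsum_cong')

lemma self_add_zero: "x \<in> carrier R \<Longrightarrow> x \<oplus> x = x \<Longrightarrow> x = \<zero>"
  by (metis a_comm add.l_cancel_one' r_zero zero_closed)

end

lemma semisimple_idempotent:
  fixes x :: "'b::ring_1"
  assumes ss: "semisimple TYPE('b)" and x: "x \<noteq> 0"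
  shows "\<exists>y. (x * y) * (x * y) = x * y \<and> x * y \<noteq> 0"
proof -
  obtain m ns and D :: "nat \<Rightarrow> 'b ring" and f :: "'b \<Rightarrow> nat \<Rightarrow> nat \<Rightarrow> nat \<Rightarrow> 'b" where hD: "\<forall>i<m. division_ring_struct (D i) \<and> 0 < ns i"
    and bij: "bij_betw f UNIV (mat_prod_carrier m ns D)"
    and fadd': "\<forall>x y. f (x + y) = mat_prod_add m ns D (f x) (f y)"
    and fmul': "\<forall>x y. f (x * y) = mat_prod_mult m ns D (f x) (f y)"
    using ss unfolding semisimple_def by blast
  have fadd: "f (x + y) = mat_prod_add m ns D (f x) (f y)" for x y using fadd' by blast
  have fmul: "f (x * y) = mat_prod_mult m ns D (f x) (f y)" for x y using fmul' by blast
  have ringD: "ring (D i)" if "i < m" for i using hD that unfolding division_ring_struct_def by auto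
  have carr: "f z \<in> mat_prod_carrier m ns D" for z using bij unfolding bij_betw_def by auto
  have h: "if i < m \<and> j < ns i \<and> k < ns i then f z i j k \<in> carrier (D i) else f z i j k = undefined" for z i j k
    using carr[of z] unfolding mat_prod_carrier_def by blast
  have carrD: "f z i j k \<in> carrier (D i)" if "i < m" "j < ns i" "k < ns i" for z i j k
    using h[of i j k z] that by simp
  have undef: "f z i j k = undefined" if "\<not> (i < m \<and> j < ns i \<and> k < ns i)" for z i j k
    using h[of i j k z] that by simp
  have inj: "inj f" using bij unfolding bij_betw_def by auto
  have e0: "f 0 = mat_prod_add m ns D (f 0) (f 0)" using fadd[of 0 0] by (simp only: add_0_left)
  have f0: "f 0 i j k = \<zero>\<^bsub>D i\<^esub>" if r: "i < m" "j < ns i" "k < ns i" for i j k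
  proof -
    have 1: "f 0 i j k = mat_prod_add m ns D (f 0) (f 0) i j k"
      using fun_cong[OF fun_cong[OF fun_cong[OF e0, of i], of j], of k] .
    have 2: "mat_prod_add m ns D (f 0) (f 0) i j k = f 0 i j k \<oplus>\<^bsub>D i\<^esub> f 0 i j k"
      unfolding mat_prod_add_def using r by simp
    have "f 0 i j k \<oplus>\<^bsub>D i\<^esub> f 0 i j k = f 0 i j k" using 1 2 by simp
    then show ?thesis using ring.self_add_zero[OF ringD[OF r(1)] carrD[OF r]] by simp
  qed
  have "f x \<noteq> f 0" using inj x by (metis injD)
  then obtain i0 p q where r0: "i0 < m" "p < ns i0" "q < ns i0" and ne: "f x i0 p q \<noteq> \<zero>\<^bsub>D i0\<^esub>"
  proof -
    assume H: "\<And>i0 p q. i0 < m \<Longrightarrow> p < ns i0 \<Longrightarrow> q < ns i0 \<Longrightarrow> f x i0 p q \<noteq> \<zero>\<^bsub>D i0\<^esub> \<Longrightarrow> thesis"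
    show thesis
    proof (rule ccontr)
      assume "\<not> thesis"
      have "f x i j k = f 0 i j k" for i j k
      proof (cases "i < m \<and> j < ns i \<and> k < ns i")
        case True
        then have "f x i j k = \<zero>\<^bsub>D i\<^esub>" using H \<open>\<not> thesis\<close> by blast
        then show ?thesis using f0 True by simp
      next
        case False then show ?thesis using undef by simp
      qed
      then have "f x = f 0" by (intro ext)
      then show False using \<open>f x \<noteq> f 0\<close> by simp
    qed
  qed
  let ?R = "D i0"
  have R: "ring ?R" using ringD[OF r0(1)] .
  have divR: "division_ring_struct ?R" using hD r0(1) by auto
  define X where "X = f x"
  have Xc: "X i0 p q \<in> carrier ?R" unfolding X_def using carrD[OF r0] .
  have XU: "X i0 p q \<in> Units ?R" using divR Xc ne unfolding division_ring_struct_def X_def by auto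
  define d where "d = inv\<^bsub>?R\<^esub> (X i0 p q)"
  have dc: "d \<in> carrier ?R" unfolding d_def using XU R by (simp add: ring.ring_simprules monoid.Units_inv_closed ring_def)
  have Xd: "X i0 p q \<otimes>\<^bsub>?R\<^esub> d = \<one>\<^bsub>?R\<^esub>"
    unfolding d_def using XU R by (simp add: monoid.Units_r_inv ring_def)
  define Y where "Y = (\<lambda>i j k. if i < m \<and> j < ns i \<and> k < ns i
     then (if i = i0 \<and> j = q \<and> k = p then d else \<zero>\<^bsub>D i\<^esub>) else undefined)"
  have Yc: "Y \<in> mat_prod_carrier m ns D"
    unfolding mat_prod_carrier_def Y_def using dc ringD by (auto simp: ring.ring_simprules)
  obtain y where y: "f y = Y" using bij Yc unfolding bij_betw_def by (metis UNIV_I f_inv_into_f)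
  have Xq: "X i0 j' q \<in> carrier ?R" if "j' < ns i0" for j' unfolding X_def using carrD r0 that by auto
  define P where "P = (\<lambda>i j k. if i < m \<and> j < ns i \<and> k < ns i
     then (if i = i0 \<and> k = p then X i0 j q \<otimes>\<^bsub>?R\<^esub> d else \<zero>\<^bsub>D i\<^esub>) else undefined)"
  have fxy: "f (x * y) = P"
  proof -
    have "mat_prod_mult m ns D X Y i j k = P i j k" for i j k
    proof (cases "i < m \<and> j < ns i \<and> k < ns i")
      case False then show ?thesis unfolding mat_prod_mult_def P_def by auto
    next
      case True
      then have Ri: "ring (D i)" using ringD by auto
      have Xij: "X i j l \<in> carrier (D i)" if "l < ns i" for l using carrD True that unfolding X_def by auto
      show ?thesis
      proof (cases "i = i0 \<and> k = p")
        case True2: True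
        have "(\<Oplus>\<^bsub>D i\<^esub>l\<in>{..<ns i}. X i j l \<otimes>\<^bsub>D i\<^esub> Y i l k) =
              (\<Oplus>\<^bsub>D i\<^esub>l\<in>{..<ns i}. if l = q then X i0 j q \<otimes>\<^bsub>?R\<^esub> d else \<zero>\<^bsub>D i\<^esub>)"
          using True True2 Xij dc Ri by (intro ring.my_finsum_cong[OF Ri]) (auto simp: Y_def ring.ring_simprules)
        also have "\<dots> = X i0 j q \<otimes>\<^bsub>?R\<^esub> d"
          using True True2 r0 Xij dc by (intro ring.finsum_delta'[OF Ri]) (auto simp: ring.ring_simprules[OF R])
        finally show ?thesis unfolding mat_prod_mult_def P_def using True True2 by simp
      next
        case False2: False
        have "(\<Oplus>\<^bsub>D i\<^esub>l\<in>{..<ns i}. X i j l \<otimes>\<^bsub>D i\<^esub> Y i l k) = (\<Oplus>\<^bsub>D i\<^esub>l\<in>{..<ns i}. \<zero>\<^bsub>D i\<^esub>)"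
          using True False2 Xij Ri by (intro ring.my_finsum_cong[OF Ri]) (auto simp: Y_def ring.ring_simprules)
        also have "\<dots> = \<zero>\<^bsub>D i\<^esub>" by (rule ring.finsum_zero''[OF Ri]) simp
        finally show ?thesis unfolding mat_prod_mult_def P_def using True False2 by auto
      qed
    qed
    then have "mat_prod_mult m ns D X Y = P" by (intro ext)
    then show ?thesis using fmul[of x y] unfolding X_def y[symmetric] by simp
  qed
  have PP: "mat_prod_mult m ns D P P = P"
  proof -
    have "mat_prod_mult m ns D P P i j k = P i j k" for i j k
    proof (cases "i < m \<and> j < ns i \<and> k < ns i")
      case False then show ?thesis unfolding mat_prod_mult_def P_def by auto
    next
      case True
      then have Ri: "ring (D i)" using ringD by auto
      have Pc: "P i j' k' \<in> carrier (D i)" if "j' < ns i" "k' < ns i" for j' k'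
        unfolding P_def using True that carrD[of i0 _ q x] dc r0 Ri
        by (auto simp: ring.ring_simprules X_def)
      show ?thesis
      proof (cases "i = i0")
        case True2: True
        have "(\<Oplus>\<^bsub>D i\<^esub>l\<in>{..<ns i}. P i j l \<otimes>\<^bsub>D i\<^esub> P i l k) =
              (\<Oplus>\<^bsub>D i\<^esub>l\<in>{..<ns i}. if l = p then P i j p \<otimes>\<^bsub>D i\<^esub> P i p k else \<zero>\<^bsub>D i\<^esub>)"
          using True True2 Pc Ri r0 Xq dc by (intro ring.my_finsum_cong[OF Ri]) (auto simp: P_def ring.ring_simprules)
        also have "\<dots> = P i j p \<otimes>\<^bsub>D i\<^esub> P i p k"
          using True True2 r0 Pc Ri by (intro ring.finsum_delta'[OF Ri]) (auto simp: ring.ring_simprules)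
        also have "\<dots> = P i j k"
        proof (cases "k = p")
          case True3: True
          have "P i p k = \<one>\<^bsub>D i\<^esub>" unfolding P_def using True True2 True3 r0 Xd by simp
          moreover have "monoid (D i)" using Ri unfolding ring_def by simp
          ultimately show ?thesis using Pc[of j p] True True2 True3 r0 by (simp add: monoid.r_one)
        next
          case False3: False
          have "P i p k = \<zero>\<^bsub>D i\<^esub>" unfolding P_def using True True2 False3 r0 by simp
          moreover have "P i j k = \<zero>\<^bsub>D i\<^esub>" unfolding P_def using True True2 False3 by simp
          ultimately show ?thesis using Pc[of j p] True True2 r0 Ri by (simp add: ring.ring_simprules)
        qed
        finally show ?thesis unfolding mat_prod_mult_def using True by simp
      next
        case False2: False
        have "(\<Oplus>\<^bsub>D i\<^esub>l\<in>{..<ns i}. P i j l \<otimes>\<^bsub>D i\<^esub> P i l k) = (\<Oplus>\<^bsub>D i\<^esub>l\<in>{..<ns i}. \<zero>\<^bsub>D i\<^esub>)"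
          using True False2 Pc Ri by (intro ring.my_finsum_cong[OF Ri]) (auto simp: P_def ring.ring_simprules)
        also have "\<dots> = \<zero>\<^bsub>D i\<^esub>" by (rule ring.finsum_zero''[OF Ri]) simp
        finally show ?thesis unfolding mat_prod_mult_def P_def using True False2 by auto
      qed
    qed
    then show ?thesis by (intro ext)
  qed
  have "f ((x * y) * (x * y)) = f (x * y)" using fmul[of "x * y" "x * y"] fxy PP by simp
  then have idem: "(x * y) * (x * y) = x * y" using inj by (metis injD)
  have "x * y \<noteq> 0"
  proof
    assume "x * y = 0"
    then have "P i0 p p = f 0 i0 p p" using fxy by simp
    moreover have "P i0 p p = \<one>\<^bsub>?R\<^esub>" unfolding P_def using r0 Xd by simp
    moreover have "f 0 i0 p p = \<zero>\<^bsub>?R\<^esub>" using f0 r0 by simp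
    moreover have "\<one>\<^bsub>?R\<^esub> \<noteq> \<zero>\<^bsub>?R\<^esub>" using divR unfolding division_ring_struct_def by auto
    ultimately show False by simp
  qed
  then show ?thesis using idem by blast
qed


lemma fd_interp:
  assumes fd: "finite_dim_space TYPE('b::real_vector)"
  obtains Bas :: "'b::real_vector set" where "finite_dimensional_vector_space ((*\<^sub>R) :: real \<Rightarrow> 'b \<Rightarrow> 'b) Bas"
proof -
  obtain Bas :: "'b set" where B: "finite Bas" "independent Bas" "span Bas = UNIV" using fds_basis[OF fd] by blast
  have "finite_dimensional_vector_space ((*\<^sub>R) :: real \<Rightarrow> 'b \<Rightarrow> 'b) Bas"
    by (unfold_locales) (use B in \<open>auto simp: scaleR_add_right scaleR_add_left dependent_raw_def span_raw_def\<close>)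
  then show ?thesis using that by blast
qed

lemma subspace_range_lmult: "subspace (range (\<lambda>b. (e::'b::real_algebra_1) * b))"
  unfolding subspace_def
proof (intro conjI ballI allI)
  show "0 \<in> range (\<lambda>b. e * b)" by (rule range_eqI[of _ _ 0]) simp
  fix x y assume "x \<in> range (\<lambda>b. e * b)" "y \<in> range (\<lambda>b. e * b)"
  then obtain a b where "x = e * a" "y = e * b" by auto
  then show "x + y \<in> range (\<lambda>b. e * b)" by (intro range_eqI[of _ _ "a + b"]) (simp add: distrib_left)
next
  fix c x assume "x \<in> range (\<lambda>b. e * b)"
  then obtain a where "x = e * a" by auto
  then show "c *\<^sub>R x \<in> range (\<lambda>b. e * b)" by (intro range_eqI[of _ _ "c *\<^sub>R a"]) (simp add: mult_scaleR_right)
qed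

lemma right_ideal_idempotent:
  fixes M :: "'b::real_algebra_1 set"
  assumes fd: "finite_dim_space TYPE('b)" and ss: "semisimple TYPE('b)"
    and M: "subspace M" and rid: "\<And>m b. m \<in> M \<Longrightarrow> m * b \<in> M"
  shows "\<exists>e\<in>M. e * e = e \<and> M = range (\<lambda>b. e * b)"
proof -
  obtain Bas :: "'b set" where "finite_dimensional_vector_space ((*\<^sub>R) :: real \<Rightarrow> 'b \<Rightarrow> 'b) Bas"
    using fd_interp[OF fd] by blast
  then interpret F: finite_dimensional_vector_space "(*\<^sub>R) :: real \<Rightarrow> 'b \<Rightarrow> 'b" Bas
    rewrites "module.dependent (*\<^sub>R) = dependent" and "module.span (*\<^sub>R) = span"
      and "module.subspace (*\<^sub>R) = subspace" and "vector_space.dim (*\<^sub>R) = dim"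
    by (simp_all add: dependent_raw_def span_raw_def subspace_raw_def dim_raw_def)
  define P where "P e \<longleftrightarrow> e \<in> M \<and> e * e = e" for e :: 'b
  define g where "g e = dim (range (\<lambda>b. e * b))" for e :: 'b
  have "P 0" unfolding P_def using M by (simp add: subspace_0)
  moreover have "\<forall>y. P y \<longrightarrow> g y < Suc F.dimension" unfolding g_def using F.dim_subset_UNIV by (metis le_imp_less_Suc)
  ultimately obtain e where e: "P e" and emax: "\<And>y. P y \<Longrightarrow> g y \<le> g e"
    using ex_has_greatest_nat[of P 0 g "Suc F.dimension"] by blast
  have eM: "e \<in> M" and ee: "e * e = e" using e unfolding P_def by auto
  have sub1: "range (\<lambda>b. e * b) \<subseteq> M" using rid eM by auto
  have sub2: "M \<subseteq> range (\<lambda>b. e * b)"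
  proof (rule ccontr)
    assume "\<not> M \<subseteq> range (\<lambda>b. e * b)"
    then obtain x where x: "x \<in> M" "x \<notin> range (\<lambda>b. e * b)" by auto
    define x' where "x' = x - e * x"
    have x'M: "x' \<in> M" unfolding x'_def using subspace_diff[OF M x(1) rid[OF eM]] .
    have x'0: "x' \<noteq> 0" using x(2) unfolding x'_def by auto
    have ex': "e * x' = 0" unfolding x'_def by (simp add: right_diff_distrib mult.assoc[symmetric] ee)
    obtain y where y: "(x' * y) * (x' * y) = x' * y" "x' * y \<noteq> 0"
      using semisimple_idempotent[OF ss x'0] by blast
    define e' where "e' = x' * y"
    have e'M: "e' \<in> M" unfolding e'_def using rid[OF x'M] .
    have e'e': "e' * e' = e'" using y(1) unfolding e'_def .
    have ee': "e * e' = 0" unfolding e'_def using ex' by (simp add: mult.assoc[symmetric])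
    define f where "f = e + e' - e' * e"
    have fM: "f \<in> M" unfolding f_def using M eM e'M rid[OF e'M, of e] by (intro subspace_diff subspace_add) auto
    have r1: "e * (e * z) = e * z" for z using ee by (simp add: mult.assoc[symmetric])
    have r2: "e' * (e' * z) = e' * z" for z using e'e' by (simp add: mult.assoc[symmetric])
    have r3: "e * (e' * z) = 0" for z using ee' by (simp add: mult.assoc[symmetric])
    have ff: "f * f = f" unfolding f_def by (simp add: algebra_simps r1 r2 r3 ee e'e' ee')
    have fe: "f * e = e" unfolding f_def by (simp add: algebra_simps r1 ee)
    have fe': "f * e' = e'" unfolding f_def by (simp add: algebra_simps r2 r3 ee' e'e')
    have "range (\<lambda>b. e * b) \<subset> range (\<lambda>b. f * b)"
    proof
      show "range (\<lambda>b. e * b) \<subseteq> range (\<lambda>b. f * b)"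
      proof
        fix z assume "z \<in> range (\<lambda>b. e * b)"
        then obtain b where "z = e * b" by auto
        then have "z = f * (e * b)" using fe by (simp add: mult.assoc[symmetric])
        then show "z \<in> range (\<lambda>b. f * b)" by auto
      qed
      have "e' \<in> range (\<lambda>b. f * b)" using fe' by (metis rangeI)
      moreover have "e' \<notin> range (\<lambda>b. e * b)"
      proof
        assume "e' \<in> range (\<lambda>b. e * b)"
        then obtain b where b: "e' = e * b" by auto
        then have "e * e' = e'" by (simp add: r1)
        then show False using ee' y(2) unfolding e'_def by simp
      qed
      ultimately show "range (\<lambda>b. e * b) \<noteq> range (\<lambda>b. f * b)" by blast
    qed
    then have "span (range (\<lambda>b. e * b)) \<subset> span (range (\<lambda>b. f * b))"
      using span_eq_iff subspace_range_lmult by metis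
    then have "g e < g f" unfolding g_def by (rule F.dim_psubset)
    moreover have "P f" unfolding P_def using fM ff by simp
    ultimately show False using emax by fastforce
  qed
  show ?thesis using eM ee sub1 sub2 by blast
qed

lemma nakayama:
  fixes f :: "'a::real_algebra_1 \<Rightarrow> 'b::ring_1"
  assumes fmult: "\<And>x y. f (x * y) = f x * f y" and fadd: "\<And>x y. f (x + y) = f x + f y"
    and fone: "f 1 = 1"
  shows "finite G \<Longrightarrow> (\<forall>g\<in>G. \<exists>k. (\<forall>h\<in>G. k h \<in> jacobson_radical) \<and> g = (\<Sum>h\<in>G. f (k h) * h))
    \<Longrightarrow> \<forall>g\<in>G. g = 0"
proof (induction "card G" arbitrary: G)
  case 0
  then show ?case by auto
next
  case (Suc n)
  then have "G \<noteq> {}" by auto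
  then obtain g where gG: "g \<in> G" by blast
  define G' where "G' = G - {g}"
  have finG': "finite G'" using Suc.prems(1) G'_def by simp
  have cardG': "card G' = n" using Suc.hyps(2) gG Suc.prems(1) unfolding G'_def by simp
  have splitG: "(\<Sum>h\<in>G. F h) = F g + (\<Sum>h\<in>G'. F h)" for F :: "'b \<Rightarrow> 'b"
    unfolding G'_def using Suc.prems(1) gG by (simp add: sum.remove)
  obtain k where k: "\<forall>h\<in>G. k h \<in> jacobson_radical" "g = (\<Sum>h\<in>G. f (k h) * h)" using Suc.prems(2) gG by blast
  obtain w where w: "w * (1 - k g) = 1" using J_one_minus_inv k(1) gG by blast
  have f0: "f 0 = 0" using fadd[of 0 0] by simp
  have fneg: "f (- x) = - f x" for x
  proof -
    have "f x + f (- x) = 0" using fadd[of x "- x"] f0 by simp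
    then show ?thesis by (metis add.commute eq_neg_iff_add_eq_0)
  qed
  have fdiff: "f (x - y) = f x - f y" for x y using fadd[of x "- y"] fneg[of y] by simp
  have "f (1 - k g) * g = (\<Sum>h\<in>G'. f (k h) * h)"
  proof -
    have eq: "g = f (k g) * g + (\<Sum>h\<in>G'. f (k h) * h)" using k(2) splitG by simp
    have "f (1 - k g) * g = g - f (k g) * g" using fdiff fone by (simp add: left_diff_distrib)
    also have "\<dots> = (\<Sum>h\<in>G'. f (k h) * h)"
      by (subst (1) eq) simp
    finally show ?thesis .
  qed
  then have gexp: "g = (\<Sum>h\<in>G'. f (w * k h) * h)"
  proof -
    assume H: "f (1 - k g) * g = (\<Sum>h\<in>G'. f (k h) * h)"
    have "g = f (w * (1 - k g)) * g" using w fone by simp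
    also have "\<dots> = f w * (f (1 - k g) * g)" using fmult by (simp add: mult.assoc)
    also have "\<dots> = (\<Sum>h\<in>G'. f (w * k h) * h)" unfolding H by (simp add: sum_distrib_left fmult mult.assoc)
    finally show ?thesis .
  qed
  have "\<forall>g2\<in>G'. \<exists>k. (\<forall>h\<in>G'. k h \<in> jacobson_radical) \<and> g2 = (\<Sum>h\<in>G'. f (k h) * h)"
  proof
    fix g2 assume g2: "g2 \<in> G'"
    obtain k2 where k2: "\<forall>h\<in>G. k2 h \<in> jacobson_radical" "g2 = (\<Sum>h\<in>G. f (k2 h) * h)"
      using Suc.prems(2) g2 unfolding G'_def by blast
    have "g2 = f (k2 g) * g + (\<Sum>h\<in>G'. f (k2 h) * h)" using k2(2) splitG by simp
    also have "f (k2 g) * g = (\<Sum>h\<in>G'. f (k2 g * (w * k h)) * h)"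
      unfolding gexp by (simp add: sum_distrib_left fmult mult.assoc)
    finally have "g2 = (\<Sum>h\<in>G'. f (k2 g * (w * k h) + k2 h) * h)"
      by (simp add: fadd distrib_right sum.distrib)
    moreover have "\<forall>h\<in>G'. k2 g * (w * k h) + k2 h \<in> jacobson_radical"
      using k(1) k2(1) unfolding G'_def by (auto intro!: J_add J_mult)
    ultimately show "\<exists>k. (\<forall>h\<in>G'. k h \<in> jacobson_radical) \<and> g2 = (\<Sum>h\<in>G'. f (k h) * h)"
      by (intro exI[of _ "\<lambda>h. k2 g * (w * k h) + k2 h"]) simp
  qed
  then have G'0: "\<forall>g\<in>G'. g = 0" using Suc.hyps(1)[OF cardG'[symmetric] finG'] by blast
  then have "(\<Sum>h\<in>G'. f (w * k h) * h) = 0" by (intro sum.neutral) auto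
  then have "g = 0" using gexp by simp
  then show ?case using G'0 unfolding G'_def by blast
qed


lemma corner_mult:
  fixes e X Y :: "'b::ring_1"
  assumes ee: "e * e = e" and lx: "(1 - e) * X * e = 0" and ly: "(1 - e) * Y * e = 0"
  shows "e * (X * Y) * e + (1 - e) * (X * Y) * (1 - e) =
         (e * X * e + (1 - e) * X * (1 - e)) * (e * Y * e + (1 - e) * Y * (1 - e))"
proof -
  define a where "a = 1 - e"
  have ea: "e * a = 0" unfolding a_def by (simp add: right_diff_distrib ee)
  have ae: "a * e = 0" unfolding a_def by (simp add: left_diff_distrib ee)
  have aa: "a * a = a" unfolding a_def by (simp add: left_diff_distrib right_diff_distrib ee)
  have sum1: "e + a = 1" unfolding a_def by simp
  have r1: "e * (e * z) = e * z" for z using ee by (simp add: mult.assoc[symmetric])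
  have r2: "e * (a * z) = 0" for z using ea by (simp add: mult.assoc[symmetric])
  have r3: "a * (e * z) = 0" for z using ae by (simp add: mult.assoc[symmetric])
  have r4: "a * (a * z) = a * z" for z using aa by (simp add: mult.assoc[symmetric])
  have lx': "a * (X * e) = 0" using lx unfolding a_def by (simp add: mult.assoc)
  have ly': "a * (Y * e) = 0" using ly unfolding a_def by (simp add: mult.assoc)
  have lx'': "a * (X * (e * z)) = 0" for z using lx' by (metis mult.assoc mult_zero_left)
  have ly'': "a * (Y * (e * z)) = 0" for z using ly' by (metis mult.assoc mult_zero_left)
  have XY: "X * Y = X * (e * Y) + X * (a * Y)"
    by (metis sum1 distrib_left distrib_right mult_1_left)
  have "e * (X * Y) * e + a * (X * Y) * a = e * (X * (e * (Y * e))) + a * (X * (a * (Y * a)))"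
    unfolding XY by (simp add: distrib_left distrib_right mult.assoc r1 r2 r3 r4 lx' ly' lx'' ly'')
  also have "\<dots> = (e * X * e + a * X * a) * (e * Y * e + a * Y * a)"
    by (simp add: distrib_left distrib_right mult.assoc r1 r2 r3 r4 lx' ly' lx'' ly'')
  finally show ?thesis unfolding a_def .
qed

lemma bl_sandwich:
  fixes \<phi> :: "'a::real_normed_vector \<Rightarrow>\<^sub>L 'b::real_normed_algebra"
  shows "bounded_linear (\<lambda>x. c * blinfun_apply \<phi> x * d)"
  using bounded_linear_compose[OF bounded_linear_mult_left[of d]
        bounded_linear_compose[OF bounded_linear_mult_right[of c] blinfun.bounded_linear_right[of \<phi>]]]
  by simp

lemma part2:
  fixes \<phi> :: "'a::{real_normed_algebra_1,banach} \<Rightarrow>\<^sub>L 'b::{real_normed_algebra_1,banach}"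
  assumes fdA: "finite_dim_space TYPE('a)" and phi: "\<phi> \<in> BAlg"
    and fdB: "finite_dim_space TYPE('b)" and ss: "semisimple TYPE('b)"
    and closed: "closedin (top_of_set BAlg) (conj_orbit \<phi>)"
  shows "blinfun_apply \<phi> ` jacobson_radical \<subseteq> {0}"
proof -
  let ?f = "blinfun_apply \<phi>"
  obtain Bas :: "'b set" where "finite_dimensional_vector_space ((*\<^sub>R) :: real \<Rightarrow> 'b \<Rightarrow> 'b) Bas"
    using fd_interp[OF fdB] by blast
  then interpret F: finite_dimensional_vector_space "(*\<^sub>R) :: real \<Rightarrow> 'b \<Rightarrow> 'b" Bas
    rewrites "module.dependent (*\<^sub>R) = dependent" and "module.span (*\<^sub>R) = span"
      and "module.subspace (*\<^sub>R) = subspace" and "vector_space.dim (*\<^sub>R) = dim"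
    by (simp_all add: dependent_raw_def span_raw_def subspace_raw_def dim_raw_def)
  have fmult: "?f (x * y) = ?f x * ?f y" for x y using BAlgD(1)[OF phi] .
  have fone: "?f 1 = 1" using BAlgD(2)[OF phi] .
  have flin: "linear ?f" by (simp add: bounded_linear.linear blinfun.bounded_linear_right)
  define X where "X = {?f j * b | j b. j \<in> (jacobson_radical :: 'a set)}"
  define M where "M = span X"
  have Msub: "subspace M" unfolding M_def by (rule subspace_span)
  have rid: "m * c \<in> M" if "m \<in> M" for m c
    using that unfolding M_def
  proof (induction rule: span_induct_alt)
    case base then show ?case by (simp add: span_zero)
  next
    case (step r x y)
    then obtain j b where "x = ?f j * b" "j \<in> jacobson_radical" unfolding X_def by blast
    then have "x * c \<in> X" unfolding X_def by (auto simp: mult.assoc)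
    then have "x * c \<in> span X" by (rule span_base)
    then show ?case using step by (simp add: distrib_right span_add span_scale mult_scaleR_left)
  qed
  have lst: "?f a * m \<in> M" if "m \<in> M" for a m
    using that unfolding M_def
  proof (induction rule: span_induct_alt)
    case base then show ?case by (simp add: span_zero)
  next
    case (step r x y)
    then obtain j b where jb: "x = ?f j * b" "j \<in> jacobson_radical" unfolding X_def by blast
    have "?f a * x = ?f (a * j) * b" using jb(1) by (simp add: fmult mult.assoc)
    then have "?f a * x \<in> X" unfolding X_def using J_mult[OF jb(2), of a] by blast
    then have "?f a * x \<in> span X" by (rule span_base)
    then show ?case using step by (simp add: distrib_left span_add span_scale mult_scaleR_right)
  qed
  obtain e where eM: "e \<in> M" and ee: "e * e = e" and Me: "M = range (\<lambda>b. e * b)"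
    using right_ideal_idempotent[OF fdB ss Msub rid] by blast
  have inM: "z \<in> M \<Longrightarrow> e * z = z" for z unfolding Me using ee by (auto simp: mult.assoc[symmetric])
  have lowz: "(1 - e) * ?f a * e = 0" for a
  proof -
    have "?f a * e \<in> M" using lst[OF eM] .
    then have "e * (?f a * e) = ?f a * e" using inM by blast
    then show ?thesis by (simp add: left_diff_distrib mult.assoc)
  qed
  define \<phi>' where "\<phi>' = Blinfun (\<lambda>x. e * ?f x * e + (1 - e) * ?f x * (1 - e))"
  have bl1: "bounded_linear (\<lambda>x. e * ?f x * e + (1 - e) * ?f x * (1 - e))"
    by (intro bounded_linear_add bl_sandwich)
  have p': "blinfun_apply \<phi>' x = e * ?f x * e + (1 - e) * ?f x * (1 - e)" for x
    unfolding \<phi>'_def using bounded_linear_Blinfun_apply[OF bl1] by simp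
  define \<Delta> where "\<Delta> = Blinfun (\<lambda>x. e * ?f x * (1 - e))"
  have pD: "blinfun_apply \<Delta> x = e * ?f x * (1 - e)" for x
    unfolding \<Delta>_def using bounded_linear_Blinfun_apply[OF bl_sandwich[of e \<phi> "1 - e"]] by simp
  define \<sigma> where "\<sigma> n = \<phi>' + inverse (real (Suc n)) *\<^sub>R \<Delta>" for n
  have "\<sigma> \<longlonglongrightarrow> \<phi>' + 0 *\<^sub>R \<Delta>"
    unfolding \<sigma>_def by (intro tendsto_add tendsto_const tendsto_scaleR LIMSEQ_inverse_real_of_nat)
  then have lim: "\<sigma> \<longlonglongrightarrow> \<phi>'" by simp
  have orb: "\<sigma> n \<in> conj_orbit \<phi>" for n
  proof -
    define t :: real where "t = inverse (real (Suc n))"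
    define s :: real where "s = real (Suc n)"
    have ts: "t * s = 1" unfolding t_def s_def by simp
    define a where "a = 1 - e"
    have ea: "e * a = 0" unfolding a_def by (simp add: right_diff_distrib ee)
    have ae: "a * e = 0" unfolding a_def by (simp add: left_diff_distrib ee)
    have aa: "a * a = a" unfolding a_def by (simp add: left_diff_distrib right_diff_distrib ee)
    define u where "u = a + t *\<^sub>R e"
    define v where "v = a + s *\<^sub>R e"
    have uv: "u * v = 1"
    proof -
      have "u * v = a * a + s *\<^sub>R (a * e) + t *\<^sub>R (e * a) + (t * s) *\<^sub>R (e * e)"
        unfolding u_def v_def by (simp add: algebra_simps)
      also have "\<dots> = a + e" using ts by (simp add: ea ae aa ee)
      finally show ?thesis unfolding a_def by simp
    qed
    have vu: "v * u = 1"
    proof -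
      have "v * u = a * a + t *\<^sub>R (a * e) + s *\<^sub>R (e * a) + (s * t) *\<^sub>R (e * e)"
        unfolding u_def v_def by (simp add: algebra_simps)
      also have "\<dots> = a + e" using ts by (simp add: ea ae aa ee mult.commute)
      finally show ?thesis unfolding a_def by simp
    qed
    have "blinfun_apply (\<sigma> n) x = u * ?f x * v" for x
    proof -
      have z: "a * ?f x * e = 0" unfolding a_def using lowz .
      have "u * ?f x * v = a * ?f x * a + s *\<^sub>R (a * ?f x * e) + t *\<^sub>R (e * ?f x * a) + (t * s) *\<^sub>R (e * ?f x * e)"
        unfolding u_def v_def
        by (simp add: distrib_left distrib_right mult_scaleR_left mult_scaleR_right scaleR_scaleR algebra_simps)
      also have "\<dots> = e * ?f x * e + a * ?f x * a + t *\<^sub>R (e * ?f x * a)" using z ts by simp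
      finally have calc: "u * ?f x * v = e * ?f x * e + a * ?f x * a + t *\<^sub>R (e * ?f x * a)" .
      have s1: "blinfun_apply (\<sigma> n) x = blinfun_apply \<phi>' x + t *\<^sub>R blinfun_apply \<Delta> x"
        unfolding \<sigma>_def t_def by (simp only: plus_blinfun.rep_eq scaleR_blinfun.rep_eq)
      have p'': "blinfun_apply \<phi>' x = e * ?f x * e + a * ?f x * a" using p' unfolding a_def .
      have pD': "blinfun_apply \<Delta> x = e * ?f x * a" using pD unfolding a_def .
      show ?thesis by (simp only: s1 p'' pD' calc)
    qed
    then show ?thesis unfolding conj_orbit_def using uv vu by blast
  qed
  have bal: "\<phi>' \<in> BAlg"
    unfolding BAlg_def
  proof (intro CollectI conjI allI)
    fix x y
    show "blinfun_apply \<phi>' (x * y) = blinfun_apply \<phi>' x * blinfun_apply \<phi>' y"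
      unfolding p' fmult using corner_mult[OF ee lowz lowz] .
  next
    show "blinfun_apply \<phi>' 1 = 1" unfolding p' fone
      by (simp add: ee left_diff_distrib right_diff_distrib)
  qed
  have orb': "\<forall>n. \<sigma> n \<in> conj_orbit \<phi>" using orb by blast
  have "\<phi>' \<in> conj_orbit \<phi>" by (rule closedin_seq_limit[OF closed orb' lim bal])
  then obtain u0 v0 where u0: "u0 * v0 = 1" "v0 * u0 = 1" "\<And>x. blinfun_apply \<phi>' x = u0 * ?f x * v0"
    unfolding conj_orbit_def by blast
  define X2 where "X2 = {?f j * m | j m. j \<in> (jacobson_radical :: 'a set) \<and> m \<in> M}"
  define M2 where "M2 = span X2"
  have M2sub: "subspace M2" unfolding M2_def by (rule subspace_span)
  have "X2 \<subseteq> M"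
  proof
    fix z assume "z \<in> X2"
    then obtain j m where "z = ?f j * m" "m \<in> M" unfolding X2_def by blast
    then show "z \<in> M" using lst by simp
  qed
  then have M2M: "M2 \<subseteq> M" unfolding M2_def using span_minimal[OF _ Msub] by blast
  have pJ: "blinfun_apply \<phi>' j * b \<in> M2" if j: "j \<in> jacobson_radical" for j b
  proof -
    have "?f j * (1 - e) \<in> M" unfolding M_def X_def using j by (auto intro: span_base)
    then have "(1 - e) * (?f j * (1 - e)) = 0" using inM[of "?f j * (1 - e)"] by (simp add: left_diff_distrib)
    then have z: "(1 - e) * ?f j * (1 - e) = 0" by (simp add: mult.assoc)
    have ebM: "e * b \<in> M" using rid[OF eM] .
    have "?f j * (e * b) \<in> X2" unfolding X2_def using j ebM by blast
    then have in2: "?f j * (e * b) \<in> M2" unfolding M2_def by (rule span_base)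
    then have "e * (?f j * (e * b)) = ?f j * (e * b)" using inM M2M by blast
    then have "blinfun_apply \<phi>' j * b = ?f j * (e * b)"
      unfolding p' using z by (simp add: distrib_right mult.assoc)
    then show ?thesis using in2 by simp
  qed
  have uM: "(\<lambda>m. u0 * m) ` M \<subseteq> M2"
  proof -
    have "(\<lambda>m. u0 * m) ` X \<subseteq> M2"
    proof
      fix z assume "z \<in> (\<lambda>m. u0 * m) ` X"
      then obtain j b where jb: "z = u0 * (?f j * b)" "j \<in> jacobson_radical" unfolding X_def by blast
      have "blinfun_apply \<phi>' j * (u0 * b) = u0 * ?f j * (v0 * u0) * b" using u0(3) by (simp add: mult.assoc)
      also have "\<dots> = z" using u0(2) jb(1) by (simp add: mult.assoc)
      finally have "z = blinfun_apply \<phi>' j * (u0 * b)" by simp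
      then show "z \<in> M2" using pJ[OF jb(2)] by simp
    qed
    then have "span ((\<lambda>m. u0 * m) ` X) \<subseteq> M2" using span_minimal[OF _ M2sub] by blast
    then show ?thesis unfolding M_def span_linear_image[OF linear_lmult] .
  qed
  have dimM: "dim M \<le> dim M2"
  proof -
    obtain BM where BM: "BM \<subseteq> M" "independent BM" "M \<subseteq> span BM" "card BM = dim M"
      using real_vector.basis_exists[of M] by blast
    have inj: "inj_on (\<lambda>m. u0 * m) S" for S
      by (rule inj_onI) (metis u0(2) mult.assoc mult_1_left)
    have "independent ((\<lambda>m. u0 * m) ` BM)"
      using real_vector.linear_independent_injective_image[OF linear_lmult BM(2) inj] .
    moreover have "(\<lambda>m. u0 * m) ` BM \<subseteq> M2" using uM BM(1) by blast
    ultimately have "card ((\<lambda>m. u0 * m) ` BM) \<le> dim M2" using F.independent_card_le_dim by blast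
    then show ?thesis using card_image[OF inj] BM(4) by simp
  qed
  have M2eq: "M2 = M" using F.subspace_dim_equal[OF M2sub Msub M2M dimM] .
  obtain SB :: "'b set" where SB: "finite SB" "span SB = UNIV" using fds_obtain[OF fdB] by blast
  define G where "G = (\<lambda>s. e * s) ` SB"
  have finG: "finite G" unfolding G_def using SB(1) by simp
  have spanG: "span G = M"
  proof -
    have "span G = (\<lambda>s. e * s) ` span SB" unfolding G_def by (rule span_linear_image[OF linear_lmult])
    then show ?thesis using SB(2) Me by simp
  qed
  have hyp: "\<forall>g\<in>G. \<exists>k. (\<forall>h\<in>G. k h \<in> jacobson_radical) \<and> g = (\<Sum>h\<in>G. ?f (k h) * h)"
  proof
    fix g assume "g \<in> G"
    then have "g \<in> M2" unfolding M2eq spanG[symmetric] by (rule span_base)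
    then show "\<exists>k. (\<forall>h\<in>G. k h \<in> jacobson_radical) \<and> g = (\<Sum>h\<in>G. ?f (k h) * h)"
      unfolding M2_def
    proof (induction rule: span_induct_alt)
      case base
      show ?case by (intro exI[of _ "\<lambda>h. 0"]) (simp add: J_zero)
    next
      case (step c x y)
      obtain k where k: "\<forall>h\<in>G. k h \<in> jacobson_radical" "y = (\<Sum>h\<in>G. ?f (k h) * h)" using step by blast
      obtain j m where jm: "x = ?f j * m" "j \<in> jacobson_radical" "m \<in> M" using step(1) unfolding X2_def by blast
      have "m \<in> span G" using jm(3) spanG by simp
      then obtain \<mu> where mu: "m = (\<Sum>h\<in>G. \<mu> h *\<^sub>R h)" using span_finite[OF finG] by auto
      have "c *\<^sub>R x + y = (\<Sum>h\<in>G. ?f (c *\<^sub>R (\<mu> h *\<^sub>R j) + k h) * h)"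
        unfolding jm(1) mu k(2)
        by (simp add: sum_distrib_left sum.distrib blinfun.add_right blinfun.scaleR_right
              distrib_right scaleR_sum_right mult_scaleR_left mult_scaleR_right)
      moreover have "\<forall>h\<in>G. c *\<^sub>R (\<mu> h *\<^sub>R j) + k h \<in> jacobson_radical"
        using k(1) jm(2) by (auto intro!: J_add J_scaleR)
      ultimately show ?case by (intro exI[of _ "\<lambda>h. c *\<^sub>R (\<mu> h *\<^sub>R j) + k h"]) simp
    qed
  qed
  have "\<forall>g\<in>G. g = 0"
    using nakayama[of ?f, OF fmult blinfun.add_right fone finG hyp] .
  then have "G \<subseteq> {0}" by auto
  then have "M \<subseteq> {0}" using spanG span_mono[of G "{0}"] by (simp add: span_insert_0 span_empty)
  moreover have "?f j \<in> M" if "j \<in> jacobson_radical" for j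
  proof -
    have "?f j * 1 \<in> X" unfolding X_def using that by blast
    then show ?thesis unfolding M_def by (simp add: span_base)
  qed
  ultimately show ?thesis by auto
qed


theorem proposition4p7:
  fixes \<phi> :: "'a::{real_normed_algebra_1,banach} \<Rightarrow>\<^sub>L 'b::{real_normed_algebra_1,banach}"
  assumes "finite_dim_space TYPE('a)"
    and "\<phi> \<in> BAlg"
  shows "(blinfun_apply \<phi> ` jacobson_radical \<subseteq> {0}
            \<longrightarrow> closedin (top_of_set BAlg) (conj_orbit \<phi>))
       \<and> (finite_dim_space TYPE('b) \<and> semisimple TYPE('b)
            \<and> closedin (top_of_set BAlg) (conj_orbit \<phi>)
            \<longrightarrow> blinfun_apply \<phi> ` jacobson_radical \<subseteq> {0})"
  using part1[OF assms(1) assms(2)] part2[OF assms(1) assms(2)] by blast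

end
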